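(* Let $U:\mathbb{R}^d\to\mathbb{R}$ satisfy: (A1) $U$ is continuously differentiable and $\|\nabla U(x)-\nabla U(y)\|_2\le L\|x-y\|_2$ for all $x,y$, for some $L>0$; (A2) $\nabla U(0)=0$; (A3) there exist $m,R>0$ such that for all $x,y\in\mathbb{R}^d$ with $\|x-y\|_2>R$, $\langle\nabla U(x)-\nabla U(y),x-y\rangle\ge m\|x-y\|_2^2$. Let $\kappa=L/m$, $c=1000$, and $\delta\le\frac1{12000\kappa}$. Let $(x_t,u_t)$ solve the discretized underdamped Langevin SDE $$dx_t=u_t\,dt,\qquad du_t=\Big(-2u_t-\frac1{c\kappa L}\nabla U\big(x_{\lfloor t/\delta\rfloor\delta}\big)\Big)dt+\sqrt{\frac4{c\kappa L}}\,dB_t,$$ started from the point mass at $(x_0,0)$ with $\|x_0\|_2\le R$, where $B_t$ is a standard Brownian motion in $\mathbb{R}^d$. Then for all $t>0$, $$\mathbb{E}\big[\|\nabla U(x_t)-\nabla U(x_{\lfloor t/\delta\rfloor\delta})\|_2^2\big]\le10^9L^2\delta^2(R^2+d/m).$$ *)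

theory Defs
  imports "HOL-Analysis.Analysis" "HOL-Probability.Probability"
begin

definition brownian_motion :: "'a measure \<Rightarrow> (real \<Rightarrow> 'a \<Rightarrow> real^'d) \<Rightarrow> bool" where
  "brownian_motion M B \<longleftrightarrow>
     prob_space M \<and>
     (\<forall>t\<ge>0. B t \<in> borel_measurable M) \<and>
     (AE \<omega> in M. B 0 \<omega> = 0 \<and> continuous_on {0..} (\<lambda>t. B t \<omega>)) \<and>
     (\<forall>ts::real list. sorted_wrt (<) ts \<and> (\<forall>t\<in>set ts. 0 \<le> t) \<longrightarrow>
        prob_space.indep_vars M (\<lambda>_. borel)
          (\<lambda>(k, i) \<omega>. (B (ts ! Suc k) \<omega> - B (ts ! k) \<omega>) $ i)
          ({..<length ts - 1} \<times> (UNIV :: 'd set))) \<and>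
     (\<forall>s t. 0 \<le> s \<and> s < t \<longrightarrow>
        (\<forall>i. distributed M lborel (\<lambda>\<omega>. (B t \<omega> - B s \<omega>) $ i) (normal_density 0 (sqrt (t - s)))))"

end

theory Submission
  imports Defs
begin

lemma young: fixes a b e :: real assumes "e > 0" shows "2*a*b \<le> e*a^2 + b^2/e"
proof -
  have "0 \<le> (e*a - b)^2 / e" using assms by simp
  also have "(e*a - b)^2 / e = e*a^2 - 2*a*b + b^2/e" using assms
    by (simp add: power2_eq_square field_simps)
  finally show ?thesis by simp
qed

lemma deriv_normsq:
  fixes f :: "real \<Rightarrow> 'a::real_inner"
  assumes "(f has_vector_derivative f') (at s)"
  shows "((\<lambda>s. (norm (f s))^2) has_real_derivative (2 * (f s \<bullet> f'))) (at s)"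
proof -
  have "((\<lambda>s. f s \<bullet> f s) has_derivative (\<lambda>h. f s \<bullet> (h *\<^sub>R f') + (h *\<^sub>R f') \<bullet> f s)) (at s)"
    using assms unfolding has_vector_derivative_def by (intro derivative_eq_intros) auto
  then show ?thesis unfolding has_field_derivative_def power2_norm_eq_inner
    by (auto simp: inner_commute algebra_simps elim!: has_derivative_eq_rhs)
qed

lemma gronwall_fin:
  fixes V K V' :: "real \<Rightarrow> real"
  assumes S: "finite S" and t: "0 \<le> t"
   and Vc: "continuous_on {0..t} V"
   and Ki: "(\<lambda>r. exp (c * r) * K r) integrable_on {0..t}"
   and D: "\<And>s. s \<in> {0<..<t} - S \<Longrightarrow> (V has_real_derivative V' s) (at s)"
   and Kc: "\<And>s. s \<in> {0<..<t} - S \<Longrightarrow> continuous (at s) K"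
   and ineq: "\<And>s. s \<in> {0<..<t} - S \<Longrightarrow> V' s \<le> - c * V s + K s"
  shows "V t \<le> exp (-c * t) * (V 0 + integral {0..t} (\<lambda>r. exp (c * r) * K r))"
proof -
  define I where "I s = integral {0..s} (\<lambda>r. exp (c * r) * K r)" for s
  define S' where "S' = S \<union> {0, t}"
  have S': "finite S'" using S by (simp add: S'_def)
  define f' where "f' s = (if s \<in> S' then 0 else exp (c * s) * (c * V s + V' s - K s))" for s
  define \<phi> where "\<phi> s = exp (c * s) * V s - I s" for s
  have dI: "(I has_real_derivative exp (c * s) * K s) (at s)" if s: "s \<in> {0<..<t} - S'" for s
  proof -
    have "((\<lambda>u. integral {0..u} (\<lambda>r. exp (c * r) * K r)) has_vector_derivative exp (c * s) * K s)
           (at s within ({0..t} - S'))"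
      apply (rule integral_has_vector_derivative_continuous_at[OF Ki _ S'])
      using s apply auto[1]
      apply (rule continuous_at_imp_continuous_within)
      using Kc[of s] s unfolding S'_def by (auto intro!: continuous_intros)
    moreover have "at s within ({0..t} - S') = at s"
      apply (rule at_within_open_subset[where S="{0<..<t} - S'"])
      using s S' by (auto intro!: open_Diff finite_imp_closed)
    ultimately show ?thesis unfolding I_def
      by (simp add: has_real_derivative_iff_has_vector_derivative)
  qed
  have dphi: "(\<phi> has_vector_derivative f' s) (at s)" if s: "s \<in> {0<..<t} - S'" for s
  proof -
    have "(\<phi> has_real_derivative (c * exp (c * s) * V s + exp (c * s) * V' s - exp (c * s) * K s)) (at s)"
      unfolding \<phi>_def
      using s D[of s] dI[OF s] unfolding S'_def
      by (auto intro!: derivative_eq_intros)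
    then show ?thesis using s unfolding f'_def
      by (simp add: has_real_derivative_iff_has_vector_derivative algebra_simps)
  qed
  have cphi: "continuous_on {0..t} \<phi>"
    unfolding \<phi>_def I_def
    by (intro continuous_intros Vc indefinite_integral_continuous_1 Ki)
  have "(f' has_integral (\<phi> t - \<phi> 0)) {0..t}"
    by (rule fundamental_theorem_of_calculus_interior_strong[OF S' t dphi cphi])
  moreover have "f' s \<le> 0" if s0: "s \<in> {0..t}" for s
  proof (cases "s \<in> S' \<or> s \<notin> {0<..<t}")
    case True
    then show ?thesis unfolding f'_def S'_def using s0 by (auto)
  next
    case False
    then have "s \<in> {0<..<t} - S" unfolding S'_def by auto
    then have "c * V s + V' s - K s \<le> 0" using ineq by force
    then show ?thesis using False unfolding f'_def
      by (simp add: mult_nonneg_nonpos)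
  qed
  ultimately have "\<phi> t - \<phi> 0 \<le> 0"
    using has_integral_le[of f' _ "{0..t}" "\<lambda>_. 0" 0] by fastforce
  then have "exp (c * t) * V t \<le> V 0 + I t" unfolding \<phi>_def I_def by simp
  then have "exp (-c * t) * (exp (c * t) * V t) \<le> exp (-c * t) * (V 0 + I t)"
    by (intro mult_left_mono) auto
  then show ?thesis unfolding I_def by (simp add: exp_minus field_simps)
qed

definition grid :: "real \<Rightarrow> real \<Rightarrow> real" where
  "grid \<delta> r = of_int \<lfloor>r / \<delta>\<rfloor> * \<delta>"

lemma grid_bounds:
  assumes "\<delta> > 0" shows "grid \<delta> r \<le> r" "r < grid \<delta> r + \<delta>"
proof -
  have "of_int \<lfloor>r / \<delta>\<rfloor> \<le> r / \<delta>" "r / \<delta> < of_int \<lfloor>r / \<delta>\<rfloor> + 1" by linarith+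
  then have "of_int \<lfloor>r / \<delta>\<rfloor> * \<delta> \<le> r / \<delta> * \<delta>" "r / \<delta> * \<delta> < (of_int \<lfloor>r / \<delta>\<rfloor> + 1) * \<delta>"
    using assms by (intro mult_right_mono mult_strict_right_mono; simp)+
  then show "grid \<delta> r \<le> r" "r < grid \<delta> r + \<delta>" unfolding grid_def using assms
    by (auto simp: field_simps)
qed

lemma grid_nonneg: assumes "\<delta> > 0" "0 \<le> r" shows "0 \<le> grid \<delta> r"
  unfolding grid_def using assms by (simp add: zero_le_mult_iff)

lemma grid_eq:
  assumes "\<delta> > 0" "of_int k * \<delta> \<le> r" "r < (of_int k + 1) * \<delta>"
  shows "grid \<delta> r = of_int k * \<delta>"
proof -
  have "of_int k \<le> r / \<delta>" "r / \<delta> < of_int k + 1" using assms by (auto simp: field_simps)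
  then have "\<lfloor>r / \<delta>\<rfloor> = k" by linarith
  then show ?thesis unfolding grid_def by simp
qed

definition gridpts :: "real \<Rightarrow> real set" where
  "gridpts \<delta> = range (\<lambda>k::int. of_int k * \<delta>)"

lemma grid_locconst:
  assumes d: "\<delta> > 0" and s: "s \<notin> gridpts \<delta>"
  shows "eventually (\<lambda>r. grid \<delta> r = grid \<delta> s) (nhds s)"
proof -
  define k where "k = \<lfloor>s / \<delta>\<rfloor>"
  have "of_int k * \<delta> \<le> s" "s < (of_int k + 1) * \<delta>"
    using grid_bounds[OF d, of s] unfolding grid_def k_def by (auto simp: algebra_simps)
  moreover have "s \<noteq> of_int k * \<delta>" using s unfolding gridpts_def by auto
  ultimately have s1: "of_int k * \<delta> < s" by auto
  have "open {of_int k * \<delta> <..< (of_int k + 1) * \<delta>}" by simp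
  moreover have "s \<in> {of_int k * \<delta> <..< (of_int k + 1) * \<delta>}"
    using s1 \<open>s < (of_int k + 1) * \<delta>\<close> by auto
  moreover have "\<forall>r \<in> {of_int k * \<delta> <..< (of_int k + 1) * \<delta>}. grid \<delta> r = grid \<delta> s"
    using grid_eq[OF d, of k] s1 \<open>s < (of_int k + 1) * \<delta>\<close> by (auto intro: less_imp_le)
  ultimately show ?thesis unfolding eventually_nhds by blast
qed

lemma grid_comp_cont:
  assumes d: "\<delta> > 0" and s: "s \<notin> gridpts \<delta>"
  shows "isCont (\<lambda>r. f (grid \<delta> r)) s"
proof -
  have "isCont (\<lambda>r. f (grid \<delta> r)) s \<longleftrightarrow> isCont (\<lambda>r. f (grid \<delta> s)) s"
    by (rule isCont_cong) (use grid_locconst[OF d s] in \<open>auto elim: eventually_mono\<close>)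
  then show ?thesis by simp
qed

lemma gridpts_finite:
  assumes d: "\<delta> > 0" shows "finite (gridpts \<delta> \<inter> {0..t})"
proof -
  have "gridpts \<delta> \<inter> {0..t} \<subseteq> (\<lambda>k::int. of_int k * \<delta>) ` {0..\<lceil>t / \<delta>\<rceil>}"
  proof
    fix r assume "r \<in> gridpts \<delta> \<inter> {0..t}"
    then obtain k :: int where k: "r = of_int k * \<delta>" "0 \<le> of_int k * \<delta>" "of_int k * \<delta> \<le> t"
      unfolding gridpts_def by auto
    then have "0 \<le> k" using d by (simp add: zero_le_mult_iff)
    moreover have "of_int k \<le> t / \<delta>" using k d by (simp add: field_simps)
    then have "k \<le> \<lceil>t / \<delta>\<rceil>" by linarith
    ultimately show "r \<in> (\<lambda>k::int. of_int k * \<delta>) ` {0..\<lceil>t / \<delta>\<rceil>}" using k by auto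
  qed
  then show ?thesis by (rule finite_subset) simp
qed

lemma step_integrable:
  fixes F :: "real \<Rightarrow> real \<Rightarrow> 'b::banach"
  assumes d: "\<delta> > 0" and s: "0 \<le> s" and cF: "\<And>y. continuous_on {0..s} (\<lambda>r. F r y)"
  shows "(\<lambda>r. F r (grid \<delta> r)) integrable_on {0..s}"
proof -
  have *: "(\<lambda>r. F r (grid \<delta> r)) integrable_on {0..min s (real n * \<delta>)}" for n :: nat
  proof (induction n)
    case 0
    have "(\<lambda>r. F r (grid \<delta> r)) integrable_on cbox 0 (0::real)" by (rule integrable_on_refl)
    then show ?case using s d by simp
  next
    case (Suc n)
    show ?case
    proof (cases "s \<le> real n * \<delta>")
      case True
      then have "min s (real (Suc n) * \<delta>) = min s (real n * \<delta>)" using d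
        by (simp add: min_def distrib_right)
      then show ?thesis using Suc by simp
    next
      case False
      then have mn: "min s (real n * \<delta>) = real n * \<delta>" by simp
      have le: "real n * \<delta> \<le> min s (real (Suc n) * \<delta>)" using False d
        by (auto simp: distrib_right)
      have "(\<lambda>r. F r (real n * \<delta>)) integrable_on {real n * \<delta> .. min s (real (Suc n) * \<delta>)}"
        apply (rule integrable_continuous_interval)
        apply (rule continuous_on_subset[OF cF])
        using d by (auto simp: zero_le_mult_iff)
      then have "(\<lambda>r. F r (grid \<delta> r)) integrable_on {real n * \<delta> .. min s (real (Suc n) * \<delta>)}"
      proof (rule integrable_spike_finite[where S="{real (Suc n) * \<delta>}", rotated 2], simp)
        fix r assume r: "r \<in> {real n * \<delta> .. min s (real (Suc n) * \<delta>)} - {real (Suc n) * \<delta>}"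
        have "grid \<delta> r = of_int (int n) * \<delta>"
          apply (rule grid_eq[OF d]) using r by (auto simp: distrib_right)
        then show "F r (grid \<delta> r) = F r (real n * \<delta>)" by simp
      qed
      moreover have "(0::real) \<le> real n * \<delta>" using d by simp
      ultimately show ?thesis
        using Henstock_Kurzweil_Integration.integrable_combine[where a=0 and c="real n * \<delta>" and b="min s (real (Suc n) * \<delta>)"] Suc mn le
        by simp
    qed
  qed
  obtain n :: nat where "s / \<delta> \<le> real n" using real_arch_simple by blast
  then have "s \<le> real n * \<delta>" using d by (simp add: field_simps)
  then show ?thesis using *[of n] by (simp add: min_def split: if_splits)
qed

lemma cs_integral:
  fixes f :: "real \<Rightarrow> 'a::euclidean_space"
  assumes cf: "continuous_on {a..b} f" and ab: "a \<le> b"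
  shows "(norm (integral {a..b} f))^2 \<le> (b - a) * integral {a..b} (\<lambda>r. (norm (f r))^2)"
proof -
  define I where "I = integral {a..b} (\<lambda>r. norm (f r))"
  define J where "J = integral {a..b} (\<lambda>r. (norm (f r))^2)"
  have cn: "continuous_on {a..b} (\<lambda>r. norm (f r))" by (intro continuous_intros cf)
  have i1: "(\<lambda>r. norm (f r)) integrable_on {a..b}" by (rule integrable_continuous_interval[OF cn])
  have i2: "(\<lambda>r. (norm (f r))^2) integrable_on {a..b}"
    by (rule integrable_continuous_interval) (intro continuous_intros cf)
  have n1: "norm (integral {a..b} f) \<le> I" unfolding I_def
    by (rule integral_norm_bound_integral[OF integrable_continuous_interval[OF cf] i1]) auto
  have I0: "0 \<le> I" unfolding I_def by (rule integral_nonneg[OF i1]) auto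
  have key: "I^2 \<le> (b - a) * J"
  proof (cases "a = b")
    case True
    then show ?thesis unfolding I_def J_def by simp
  next
    case False
    then have ba: "b - a > 0" using ab by simp
    define l where "l = I / (b - a)"
    have "0 \<le> integral {a..b} (\<lambda>r. (norm (f r) - l)^2)"
      by (rule integral_nonneg) (auto intro!: integrable_continuous_interval continuous_intros cf)
    also have "integral {a..b} (\<lambda>r. (norm (f r) - l)^2) =
        integral {a..b} (\<lambda>r. (norm (f r))^2 - 2 * l * norm (f r) + l^2)"
      by (rule integral_cong) (simp add: power2_eq_square algebra_simps)
    also have "\<dots> = J - 2 * l * I + l^2 * (b - a)"
    proof (rule integral_unique)
      have "((\<lambda>r. (norm (f r))^2 - 2 * l * norm (f r) + l^2) has_integral
          (J - 2 * l * I + Henstock_Kurzweil_Integration.content {a..b} *\<^sub>R l^2)) {a..b}"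
        unfolding I_def J_def
        by (intro has_integral_add has_integral_diff has_integral_mult_right integrable_integral
            i1 i2 has_integral_const_real)
      then show "((\<lambda>r. (norm (f r))^2 - 2 * l * norm (f r) + l^2) has_integral
          (J - 2 * l * I + l^2 * (b - a))) {a..b}" using ab by (simp add: mult.commute)
    qed
    also have "\<dots> = J - I^2 / (b - a)"
    proof -
      have "\<And>w. w > 0 \<Longrightarrow> J - 2 * (I / w) * I + (I / w)^2 * w = J - I^2 / w"
        by (simp add: field_simps power2_eq_square)
      then show ?thesis unfolding l_def using ba by blast
    qed
    finally have "I^2 / (b - a) \<le> J" by simp
    then show ?thesis using ba by (simp add: field_simps)
  qed
  have "(norm (integral {a..b} f))^2 \<le> I^2"
    using n1 by (intro power_mono) auto
  then show ?thesis using key unfolding J_def by simp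
qed

lemma deriv_int0:
  fixes f :: "real \<Rightarrow> real"
  assumes cf: "continuous_on {0..} f" and s: "s > 0"
  shows "((\<lambda>r. integral {0..r} f) has_real_derivative f s) (at s)"
proof -
  have "((\<lambda>r. integral {0..r} f) has_vector_derivative f s) (at s within {0..s+1})"
    by (rule integral_has_vector_derivative) (use cf s in \<open>auto intro: continuous_on_subset\<close>)
  moreover have "at s within {0..s+1} = at s"
    by (rule at_within_open_subset[where S="{0<..<s+1}"]) (use s in auto)
  ultimately show ?thesis by (simp add: has_real_derivative_iff_has_vector_derivative)
qed

locale detsys =
  fixes G :: "real^'d \<Rightarrow> real^'d" and L m R a \<delta> :: real and x0 :: "real^'d"
    and x u q e h :: "real \<Rightarrow> real^'d"
  assumes Lpos: "L > 0" and mpos: "m > 0" and mL: "m \<le> L" and apos: "a > 0"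
    and aL2: "a * L^2 = m / 1000"
    and dpos: "\<delta> > 0" and dle: "\<delta> \<le> 1 / 12000"
    and Gbound: "\<And>y. norm (G y) \<le> L * norm y"
    and GLip: "\<And>y z. norm (G y - G z) \<le> L * norm (y - z)"
    and Gdiss: "\<And>y. y \<bullet> G y \<ge> m * (norm y)^2 - (L + m) * R^2"
    and cx: "continuous_on {0..} x" and cu: "continuous_on {0..} u"
    and cq: "continuous_on {0..} q" and ce: "continuous_on {0..} e"
    and ch: "continuous_on {0..} h"
    and dx: "\<And>s. s > 0 \<Longrightarrow> (x has_vector_derivative u s) (at s)"
    and dq: "\<And>s. s > 0 \<Longrightarrow> s \<notin> gridpts \<delta> \<Longrightarrow>
              (q has_vector_derivative ((- (a / 2)) *\<^sub>R G (x (grid \<delta> s)) + h s)) (at s)"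
    and ueq: "\<And>s. s \<ge> 0 \<Longrightarrow> u s = 2 *\<^sub>R (q s - x s) + e s"
    and x00: "x 0 = x0" and q00: "q 0 = x0"
begin

lemma aL: "a * L \<le> 1 / 1000"
proof -
  have "a * L = m / (1000 * L)" using aL2 Lpos by (simp add: power2_eq_square field_simps)
  also have "\<dots> \<le> 1 / 1000" using mL Lpos by (simp add: field_simps)
  finally show ?thesis .
qed

lemma am: "a * m \<le> 1 / 1000"
proof -
  have "a * m \<le> a * L" using mL apos by simp
  then show ?thesis using aL by simp
qed

lemma cont_at: "(s::real) > 0 \<Longrightarrow> continuous_on {0..} f \<Longrightarrow> isCont f s"
proof -
  assume s: "s > 0" and c: "continuous_on {0..} f"
  have i: "interior {0::real..} = {0<..}" by (rule interior_Ici[of "-1"]) simp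
  show ?thesis by (rule continuous_on_interior[OF c]) (simp add: i s)
qed

definition K2 :: "real \<Rightarrow> real" where
  "K2 r = (norm (e r))^2 + (norm (h r))^2 + (a * L)^2 * (norm (x (grid \<delta> r)))^2"

lemma S2:
  assumes t: "0 \<le> t"
  shows "(norm (x t - q t))^2 \<le> exp (- t) * integral {0..t} (\<lambda>r. exp r * K2 r)"
proof -
  define V where "V s = (norm (x s - q s))^2" for s
  define V' where "V' s = 2 * ((x s - q s) \<bullet> (u s - ((- (a / 2)) *\<^sub>R G (x (grid \<delta> s)) + h s)))" for s
  define S where "S = gridpts \<delta> \<inter> {0..t}"
  have "V t \<le> exp (- 1 * t) * (V 0 + integral {0..t} (\<lambda>r. exp (1 * r) * K2 r))"
  proof (rule gronwall_fin[where S=S and V'=V'])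
    show "finite S" unfolding S_def by (rule gridpts_finite[OF dpos])
    show "0 \<le> t" by (rule t)
    show "continuous_on {0..t} V" unfolding V_def
      by (intro continuous_intros continuous_on_subset[OF cx] continuous_on_subset[OF cq]) auto
    show "(\<lambda>r. exp (1 * r) * K2 r) integrable_on {0..t}"
      unfolding K2_def
      by (rule step_integrable[OF dpos t, where F="\<lambda>r y. exp (1 * r) * ((norm (e r))^2 + (norm (h r))^2 + (a * L)^2 * (norm (x y))^2)"])
         (intro continuous_intros continuous_on_subset[OF ce] continuous_on_subset[OF ch]; auto)
  next
    fix s assume s: "s \<in> {0<..<t} - S"
    then have s0: "s > 0" and sg: "s \<notin> gridpts \<delta>" unfolding S_def by auto
    show "(V has_real_derivative V' s) (at s)"
      unfolding V_def V'_def
      by (rule deriv_normsq) (intro derivative_intros dx[OF s0] dq[OF s0 sg])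
    show "isCont K2 s" unfolding K2_def
      by (intro continuous_intros cont_at[OF s0 ce] cont_at[OF s0 ch] grid_comp_cont[OF dpos sg])
    define w where "w = x s - q s"
    define \<Gamma> where "\<Gamma> = G (x (grid \<delta> s))"
    have us: "u s = (-2) *\<^sub>R w + e s" using ueq[of s] s0 unfolding w_def by (simp add: algebra_simps)
    have V's: "V' s = -4 * (norm w)^2 + 2 * (w \<bullet> e s) + a * (w \<bullet> \<Gamma>) - 2 * (w \<bullet> h s)"
      unfolding V'_def us w_def[symmetric] \<Gamma>_def[symmetric]
      by (simp add: inner_add_right inner_diff_right power2_norm_eq_inner algebra_simps)
    define W where "W = norm w"
    define E where "E = norm (e s)"
    define H where "H = norm (h s)"
    define P where "P = a * L * norm (x (grid \<delta> s))"
    have F1: "w \<bullet> e s \<le> W * E" unfolding W_def E_def by (rule norm_cauchy_schwarz)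
    have F2: "- (w \<bullet> h s) \<le> W * H"
      using norm_cauchy_schwarz[of w "- h s"] unfolding W_def H_def by simp
    have "w \<bullet> \<Gamma> \<le> norm w * (L * norm (x (grid \<delta> s)))"
      using norm_cauchy_schwarz[of w \<Gamma>] Gbound[of "x (grid \<delta> s)"] unfolding \<Gamma>_def
      by (meson mult_left_mono norm_ge_zero order_trans)
    then have "a * (w \<bullet> \<Gamma>) \<le> a * (norm w * (L * norm (x (grid \<delta> s))))"
      using apos by (intro mult_left_mono) auto
    then have F3: "a * (w \<bullet> \<Gamma>) \<le> 2 * W * (P / 2)" unfolding W_def P_def by (simp add: algebra_simps)
    have F4: "2 * W * E \<le> W^2 + E^2" using young[of 1 W E] by simp
    have F5: "2 * W * H \<le> W^2 + H^2" using young[of 1 W H] by simp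
    have F6: "2 * W * (P / 2) \<le> W^2 + (P / 2)^2" using young[of 1 W "P / 2"] by simp
    have F7a: "(P / 2)^2 = (a * L)^2 * (norm (x (grid \<delta> s)))^2 / 4"
      unfolding P_def by (simp add: power2_eq_square)
    have F7b: "0 \<le> (a * L)^2 * (norm (x (grid \<delta> s)))^2" by simp
    have F7: "(P / 2)^2 \<le> (a * L)^2 * (norm (x (grid \<delta> s)))^2" using F7a F7b by linarith
    have F0: "V' s = -4 * W^2 + 2 * (w \<bullet> e s) + a * (w \<bullet> \<Gamma>) - 2 * (w \<bullet> h s)"
      using \<open>V' s = -4 * (norm w)^2 + 2 * (w \<bullet> e s) + a * (w \<bullet> \<Gamma>) - 2 * (w \<bullet> h s)\<close>
      unfolding W_def by simp
    have "V' s \<le> (-1) * W^2 + E^2 + H^2 + (a * L)^2 * (norm (x (grid \<delta> s)))^2"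
      using F0 F1 F2 F3 F4 F5 F6 F7 by linarith
    then show "V' s \<le> - 1 * V s + K2 s" unfolding V_def K2_def w_def W_def E_def H_def by simp
  qed
  then show ?thesis unfolding V_def using x00 q00 by simp
qed

end

context detsys begin

definition U :: "real \<Rightarrow> real" where "U r = (norm (u r))^2"
definition I0 :: "real \<Rightarrow> real" where "I0 s = integral {0..s} U"
definition I1 :: "real \<Rightarrow> real" where "I1 s = integral {0..s} (\<lambda>r. (r + 2 * \<delta>) * U r)"
definition lo :: "real \<Rightarrow> real" where "lo s = max 0 (s - 2 * \<delta>)"
definition J :: "real \<Rightarrow> real" where "J s = I0 s - I0 (lo s)"
definition T :: "real \<Rightarrow> real" where "T s = (I1 s - I1 (lo s)) - s * (I0 s - I0 (lo s))"

lemma cU: "continuous_on {0..} U" unfolding U_def by (intro continuous_intros cu)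
lemma cU1: "continuous_on {0..} (\<lambda>r. (r + 2 * \<delta>) * U r)" by (intro continuous_intros cU)

lemma intU: "0 \<le> p \<Longrightarrow> U integrable_on {p..s}"
  by (rule integrable_continuous_interval, rule continuous_on_subset[OF cU]) auto
lemma intU1: "0 \<le> p \<Longrightarrow> (\<lambda>r. (r + 2 * \<delta>) * U r) integrable_on {p..s}"
  by (rule integrable_continuous_interval, rule continuous_on_subset[OF cU1]) auto

lemma diffI:
  fixes f :: "real \<Rightarrow> real"
  assumes "0 \<le> p" "p \<le> s" "f integrable_on {0..s}"
  shows "integral {0..s} f - integral {0..p} f = integral {p..s} f"
  using Henstock_Kurzweil_Integration.integral_combine[of 0 p s f] assms by simp

lemma lo_le: "s \<ge> 0 \<Longrightarrow> 0 \<le> lo s \<and> lo s \<le> s" unfolding lo_def using dpos by auto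

lemma J_int: "s \<ge> 0 \<Longrightarrow> J s = integral {lo s..s} U"
  unfolding J_def I0_def using lo_le[of s] by (intro diffI intU) auto

lemma T_int: assumes s: "s \<ge> 0" shows "T s = integral {lo s..s} (\<lambda>r. (r - s + 2 * \<delta>) * U r)"
proof -
  have "T s = integral {lo s..s} (\<lambda>r. (r + 2 * \<delta>) * U r) - s * integral {lo s..s} U"
    unfolding T_def I0_def I1_def using lo_le[OF s] by (simp add: diffI intU intU1)
  also have "\<dots> = integral {lo s..s} (\<lambda>r. (r + 2 * \<delta>) * U r - s * U r)"
  proof -
    have "integral {lo s..s} (\<lambda>r. (r + 2 * \<delta>) * U r - s * U r) =
          integral {lo s..s} (\<lambda>r. (r + 2 * \<delta>) * U r) - integral {lo s..s} (\<lambda>r. s * U r)"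
      apply (rule integral_diff)
      using lo_le[OF s] apply (simp add: intU1)
      apply (rule integrable_continuous_interval)
      apply (intro continuous_intros continuous_on_subset[OF cU])
      using lo_le[OF s] by auto
    then show ?thesis by (simp add: integral_mult_right)
  qed
  finally show ?thesis by (simp add: algebra_simps)
qed

lemma U_nonneg: "0 \<le> U r" unfolding U_def by simp

lemma T_nonneg: assumes s: "s \<ge> 0" shows "0 \<le> T s"
proof -
  have i: "(\<lambda>r. (r - s + 2 * \<delta>) * U r) integrable_on {lo s..s}"
    apply (rule integrable_continuous_interval)
    apply (intro continuous_intros continuous_on_subset[OF cU])
    using lo_le[OF s] by auto
  have "\<And>r. r \<in> {lo s..s} \<Longrightarrow> 0 \<le> (r - s + 2 * \<delta>) * U r"
  proof -
    fix r assume "r \<in> {lo s..s}"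
    then have "0 \<le> r - s + 2 * \<delta>" unfolding lo_def by auto
    then show "0 \<le> (r - s + 2 * \<delta>) * U r" using U_nonneg by simp
  qed
  then show ?thesis unfolding T_int[OF s] by (rule integral_nonneg[OF i])
qed

lemma T_le: assumes s: "s \<ge> 0" shows "T s \<le> 2 * \<delta> * J s"
proof -
  have "T s \<le> integral {lo s..s} (\<lambda>r. 2 * \<delta> * U r)"
    unfolding T_int[OF s]
    apply (rule integral_le)
      apply (rule integrable_continuous_interval)
      apply (intro continuous_intros continuous_on_subset[OF cU])
    using lo_le[OF s] apply auto[1]
     apply (rule integrable_continuous_interval)
     apply (intro continuous_intros continuous_on_subset[OF cU])
    using lo_le[OF s] apply auto[1]
    using U_nonneg by (auto intro!: mult_right_mono)
  also have "\<dots> = 2 * \<delta> * J s" using J_int[OF s] by simp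
  finally show ?thesis .
qed

lemma J_nonneg: "s \<ge> 0 \<Longrightarrow> 0 \<le> J s"
  using J_int[of s] lo_le[of s] U_nonneg by (auto intro!: integral_nonneg intU)

lemma D_le: assumes s: "s \<ge> 0"
  shows "(norm (x s - x (grid \<delta> s)))^2 \<le> \<delta> * J s"
proof -
  define g where "g = grid \<delta> s"
  have g: "0 \<le> g" "g \<le> s" "s < g + \<delta>" using grid_bounds[OF dpos, of s] grid_nonneg[OF dpos s]
    unfolding g_def by auto
  have "(u has_integral (x s - x g)) {g..s}"
    apply (rule fundamental_theorem_of_calculus_interior[OF g(2)])
     apply (rule continuous_on_subset[OF cx]) using g apply auto[1]
    using dx g by auto
  then have "x s - x g = integral {g..s} u" by (simp add: integral_unique)
  then have "(norm (x s - x g))^2 \<le> (s - g) * integral {g..s} U"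
    unfolding U_def using cs_integral[of g s u] g continuous_on_subset[OF cu, of "{g..s}"] by auto
  also have "\<dots> \<le> \<delta> * integral {g..s} U"
    apply (rule mult_right_mono) using g U_nonneg by (auto intro!: integral_nonneg intU)
  also have "integral {g..s} U \<le> integral {lo s..s} U"
    apply (rule integral_subset_le)
    using g lo_le[OF s] U_nonneg by (auto intro!: intU simp: lo_def)
  then have "\<delta> * integral {g..s} U \<le> \<delta> * J s" using J_int[OF s] dpos by simp
  finally show ?thesis unfolding g_def .
qed

lemma I0_deriv: "s > 0 \<Longrightarrow> (I0 has_real_derivative U s) (at s)"
  unfolding I0_def by (rule deriv_int0[OF cU])
lemma I1_deriv: "s > 0 \<Longrightarrow> (I1 has_real_derivative (s + 2 * \<delta>) * U s) (at s)"
  unfolding I1_def by (rule deriv_int0[OF cU1, of s, simplified])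

lemma dT: assumes s: "s > 0" "s \<noteq> 2 * \<delta>"
  shows "(T has_real_derivative (2 * \<delta> * U s - J s)) (at s)"
proof (cases "s < 2 * \<delta>")
  case True
  have d1: "(I1 has_real_derivative (s + 2 * \<delta>) * U s) (at s)" by (rule I1_deriv[OF s(1)])
  have d0: "(I0 has_real_derivative U s) (at s)" by (rule I0_deriv[OF s(1)])
  have dm: "((\<lambda>r. r * I0 r) has_real_derivative (1 * I0 s + s * U s)) (at s)"
    using DERIV_mult[OF DERIV_ident d0] by (simp add: algebra_simps)
  have "((\<lambda>r. I1 r - r * I0 r) has_real_derivative ((s + 2 * \<delta>) * U s - (1 * I0 s + s * U s))) (at s)"
    by (rule DERIV_diff[OF d1 dm])
  then have "((\<lambda>r. I1 r - r * I0 r) has_real_derivative (2 * \<delta> * U s - J s)) (at s)"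
    using True unfolding J_def lo_def I0_def by (simp add: algebra_simps)
  then show ?thesis
    apply (rule has_field_derivative_transform_within_open[where S="{0<..<2*\<delta>}"])
    using s True by (auto simp: T_def lo_def I0_def I1_def)
next
  case False
  then have s2: "s > 2 * \<delta>" using s by auto
  then have s2': "s - 2 * \<delta> > 0" by simp
  have d1: "(I1 has_real_derivative (s + 2 * \<delta>) * U s) (at s)" by (rule I1_deriv[OF s(1)])
  have d0: "(I0 has_real_derivative U s) (at s)" by (rule I0_deriv[OF s(1)])
  have dsh: "((\<lambda>r. r - 2 * \<delta>) has_real_derivative 1) (at s)"
    using DERIV_diff[OF DERIV_ident DERIV_const[of "2 * \<delta>"]] by simp
  have d1': "((\<lambda>r. I1 (r - 2 * \<delta>)) has_real_derivative ((s - 2 * \<delta>) + 2 * \<delta>) * U (s - 2 * \<delta>) * 1) (at s)"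
    by (rule DERIV_chain2[OF I1_deriv[OF s2'] dsh])
  have d0': "((\<lambda>r. I0 (r - 2 * \<delta>)) has_real_derivative U (s - 2 * \<delta>) * 1) (at s)"
    by (rule DERIV_chain2[OF I0_deriv[OF s2'] dsh])
  have dA: "((\<lambda>r. I0 r - I0 (r - 2 * \<delta>)) has_real_derivative (U s - U (s - 2 * \<delta>) * 1)) (at s)"
    by (rule DERIV_diff[OF d0 d0'])
  have dm: "((\<lambda>r. r * (I0 r - I0 (r - 2 * \<delta>))) has_real_derivative
      (1 * (I0 s - I0 (s - 2 * \<delta>)) + s * (U s - U (s - 2 * \<delta>) * 1))) (at s)"
    using DERIV_mult[OF DERIV_ident dA] by (simp add: algebra_simps)
  have "((\<lambda>r. (I1 r - I1 (r - 2 * \<delta>)) - r * (I0 r - I0 (r - 2 * \<delta>))) has_real_derivative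
      (((s + 2 * \<delta>) * U s - ((s - 2 * \<delta>) + 2 * \<delta>) * U (s - 2 * \<delta>) * 1)
       - (1 * (I0 s - I0 (s - 2 * \<delta>)) + s * (U s - U (s - 2 * \<delta>) * 1)))) (at s)"
    by (rule DERIV_diff[OF DERIV_diff[OF d1 d1'] dm])
  then have "((\<lambda>r. (I1 r - I1 (r - 2 * \<delta>)) - r * (I0 r - I0 (r - 2 * \<delta>))) has_real_derivative
      (2 * \<delta> * U s - J s)) (at s)"
    using s2 unfolding J_def lo_def by (simp add: algebra_simps)
  then show ?thesis
    apply (rule has_field_derivative_transform_within_open[where S="{2*\<delta><..}"])
    using s2 by (auto simp: T_def lo_def)
qed

lemma T0: "T 0 = 0" unfolding T_def lo_def I0_def I1_def using dpos by simp

lemma cT: assumes t: "0 \<le> t" shows "continuous_on {0..t} T"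
proof -
  have c0: "continuous_on {0..t} I0" unfolding I0_def
    by (rule indefinite_integral_continuous_1) (rule intU, simp)
  have c1: "continuous_on {0..t} I1" unfolding I1_def
    by (rule indefinite_integral_continuous_1) (rule intU1, simp)
  have cl: "continuous_on {0..t} lo" unfolding lo_def by (intro continuous_intros)
  have im: "lo ` {0..t} \<subseteq> {0..t}" unfolding lo_def using dpos by auto
  have c0l: "continuous_on {0..t} (\<lambda>s. I0 (lo s))"
    by (rule continuous_on_compose2[OF c0 cl im])
  have c1l: "continuous_on {0..t} (\<lambda>s. I1 (lo s))"
    by (rule continuous_on_compose2[OF c1 cl im])
  show ?thesis unfolding T_def
    by (intro continuous_intros c0 c1 c0l c1l)
qed

end

context detsys begin

definition K1 :: "real \<Rightarrow> real" where
  "K1 r = a * (L + m) * R^2 + (8 / (a * m)) * (norm (h r))^2 + (norm (h r))^2 + 2 * (norm (e r))^2"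

lemma S1_arith:
  fixes V' X Q W Dn E H Uv Jv Tv qg qh we wg wh :: real
  assumes V': "V' = - a * qg + 2 * qh + (-4 * W^2 + 2 * we + a * wg - 2 * wh) + (\<delta> / 100) * (2 * \<delta> * Uv - Jv)"
    and nn: "0 \<le> X" "0 \<le> Q" "0 \<le> W" "0 \<le> Dn" "0 \<le> E" "0 \<le> H" "0 \<le> Tv"
    and qg: "qg \<ge> m * X^2 - (L + m) * R^2 - L * W * X - L * Q * Dn"
    and qh: "qh \<le> Q * H" and we: "we \<le> W * E" and wh: "- wh \<le> W * H"
    and wg: "wg \<le> L * W * (X + Dn)"
    and Uv: "Uv \<le> 8 * W^2 + 2 * E^2"
    and JD: "Dn^2 \<le> \<delta> * Jv" and JT: "Tv \<le> 2 * \<delta> * Jv"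
    and QXW: "Q \<le> X + W" "Q^2 \<le> 2 * X^2 + 2 * W^2"
  shows "V' \<le> - (a * m / 8) * (Q^2 + W^2 + (\<delta> / 100) * Tv)
               + (a * (L + m) * R^2 + (8 / (a * m)) * H^2 + H^2 + 2 * E^2)"
proof -
  have am0: "a * m > 0" using apos mpos by simp
  define HH where "HH = (8 / (a * m)) * H^2"
  define cR where "cR = a * (L + m) * R^2"
  have aL2m: "a * L^2 / m = 1 / 1000" using aL2 mpos by simp
  have P1: "- a * qg \<le> - (a * m * X^2) + cR + a * L * W * X + a * L * Q * Dn"
  proof -
    have "a * qg \<ge> a * (m * X^2 - (L + m) * R^2 - L * W * X - L * Q * Dn)"
      using qg apos by (intro mult_left_mono) auto
    then show ?thesis unfolding cR_def by (simp add: algebra_simps)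
  qed
  have P3: "a * wg \<le> a * L * W * X + a * L * W * Dn"
  proof -
    have "a * wg \<le> a * (L * W * (X + Dn))" using wg apos by (intro mult_left_mono) auto
    then show ?thesis by (simp add: algebra_simps)
  qed
  have Y1: "2 * (a * L * W * X) \<le> a * m * X^2 / 4 + 4 * W^2 / 1000"
  proof -
    have "2 * X * (a * L * W) \<le> (a * m / 4) * X^2 + (a * L * W)^2 / (a * m / 4)"
      by (rule young) (use am0 in simp)
    also have "(a * L * W)^2 / (a * m / 4) = 4 * (a * L^2 / m) * W^2"
      using apos mpos by (simp add: power2_eq_square field_simps)
    finally show ?thesis using aL2m by (simp add: algebra_simps)
  qed
  have Y2: "a * L * Q * Dn \<le> a * L * X * Dn + a * L * W * Dn"
  proof -
    have "a * L * Dn * Q \<le> a * L * Dn * (X + W)"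
      using QXW(1) apos Lpos nn by (intro mult_left_mono) auto
    then show ?thesis by (simp add: algebra_simps)
  qed
  have Y2b: "a * L * X * Dn \<le> a * m * X^2 / 4 + Dn^2 / 1000"
  proof -
    have "2 * X * (a * L * Dn) \<le> (a * m / 2) * X^2 + (a * L * Dn)^2 / (a * m / 2)"
      by (rule young) (use am0 in simp)
    also have "(a * L * Dn)^2 / (a * m / 2) = 2 * (a * L^2 / m) * Dn^2"
      using apos mpos by (simp add: power2_eq_square field_simps)
    finally show ?thesis using aL2m by (simp add: algebra_simps)
  qed
  have Y3: "2 * (a * L * W * Dn) \<le> W^2 / 1000 + Dn^2 / 1000"
  proof -
    have "2 * W * Dn \<le> W^2 + Dn^2" using young[of 1 W Dn] by simp
    then have "(a * L) * (2 * W * Dn) \<le> (a * L) * (W^2 + Dn^2)"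
      using apos Lpos by (intro mult_left_mono) auto
    also have "\<dots> \<le> (1 / 1000) * (W^2 + Dn^2)" using aL by (intro mult_right_mono) auto
    finally show ?thesis by (simp add: algebra_simps)
  qed
  have Y4: "2 * Q * H \<le> a * m * Q^2 / 8 + HH"
  proof -
    have "2 * Q * H \<le> (a * m / 8) * Q^2 + H^2 / (a * m / 8)" by (rule young) (use am0 in simp)
    also have "H^2 / (a * m / 8) = HH" unfolding HH_def using am0 by (simp add: field_simps)
    finally show ?thesis by simp
  qed
  have Y4b: "a * m * Q^2 \<le> 2 * (a * m * X^2) + 2 * (a * m * W^2)"
  proof -
    have "a * m * Q^2 \<le> a * m * (2 * X^2 + 2 * W^2)" using QXW(2) am0 by (intro mult_left_mono) auto
    then show ?thesis by (simp add: algebra_simps)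
  qed
  have Y4c: "a * m * W^2 \<le> W^2 / 1000"
    using mult_right_mono[OF am, of "W^2"] by simp
  have Y5: "2 * W * E \<le> W^2 + E^2" using young[of 1 W E] by simp
  have Y6: "2 * W * H \<le> W^2 + H^2" using young[of 1 W H] by simp
  have P4: "(\<delta> / 100) * (2 * \<delta> * Uv - Jv) \<le> W^2 / 1000 + E^2 - Dn^2 / 200 - (a * m / 8) * ((\<delta> / 100) * Tv)"
  proof -
    define Y where "Y = \<delta> * \<delta> * Uv"
    define Z where "Z = \<delta> * Jv"
    define K where "K = a * m * \<delta> * Tv"
    have e1: "(\<delta> / 100) * (2 * \<delta> * Uv - Jv) = Y / 50 - Z / 100" unfolding Y_def Z_def
      by (simp add: field_simps)
    have e2: "(a * m / 8) * ((\<delta> / 100) * Tv) = K / 800" unfolding K_def by (simp add: field_simps)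
    have "\<delta> * \<delta> \<le> \<delta> * 1" using dle dpos by (intro mult_left_mono) auto
    then have dd: "\<delta> * \<delta> \<le> 1 / 1000" using dle by linarith
    have "\<delta> * \<delta> * Uv \<le> \<delta> * \<delta> * (8 * W^2 + 2 * E^2)" using Uv by (intro mult_left_mono) auto
    also have "\<dots> \<le> (1 / 1000) * (8 * W^2 + 2 * E^2)" using dd by (intro mult_right_mono) auto
    finally have A0: "Y \<le> (1 / 1000) * (8 * W^2 + 2 * E^2)" unfolding Y_def .
    then have A: "Y \<le> W^2 / 125 + E^2 / 500" by simp
    have "a * m * \<delta> \<le> (1 / 1000) * (1 / 12000)" using am dle am0 dpos
      by (intro mult_mono) auto
    then have "a * m * \<delta> \<le> 1" by simp
    then have "(a * m * \<delta>) * Tv \<le> 1 * Tv" using nn by (intro mult_right_mono) auto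
    then have B: "K \<le> Tv" unfolding K_def by simp
    have K0: "0 \<le> K" unfolding K_def using am0 dpos nn by simp
    have JD': "Dn^2 \<le> Z" unfolding Z_def by (rule JD)
    have JT': "Tv \<le> 2 * Z" unfolding Z_def using JT by simp
    have W0: "0 \<le> W^2" "0 \<le> E^2" "0 \<le> Dn^2" by simp_all
    show ?thesis unfolding e1 e2 using A B K0 JD' JT' W0 by linarith
  qed
  define mX where "mX = a * m * X^2"
  define mW where "mW = a * m * W^2"
  define mQ where "mQ = a * m * Q^2"
  define LWX where "LWX = a * L * W * X"
  define LXD where "LXD = a * L * X * Dn"
  define LWD where "LWD = a * L * W * Dn"
  define LQD where "LQD = a * L * Q * Dn"
  define Aqg where "Aqg = a * qg"
  define Awg where "Awg = a * wg"
  define P4L where "P4L = (\<delta> / 100) * (2 * \<delta> * Uv - Jv)"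
  define mT where "mT = (a * m / 8) * ((\<delta> / 100) * Tv)"
  have V'': "V' = - Aqg + 2 * qh + (-4 * W^2 + 2 * we + Awg - 2 * wh) + P4L"
    unfolding Aqg_def Awg_def P4L_def V' by simp
  have P1': "- Aqg \<le> - mX + cR + LWX + LQD" using P1 unfolding Aqg_def mX_def LWX_def LQD_def by simp
  have P3': "Awg \<le> LWX + LWD" using P3 unfolding Awg_def LWX_def LWD_def by simp
  have Y1': "2 * LWX \<le> mX / 4 + 4 * W^2 / 1000" using Y1 unfolding LWX_def mX_def by simp
  have Y2': "LQD \<le> LXD + LWD" using Y2 unfolding LQD_def LXD_def LWD_def by simp
  have Y2b': "LXD \<le> mX / 4 + Dn^2 / 1000" using Y2b unfolding LXD_def mX_def by simp
  have Y3': "2 * LWD \<le> W^2 / 1000 + Dn^2 / 1000" using Y3 unfolding LWD_def by simp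
  have Y4': "2 * (Q * H) \<le> mQ / 8 + HH" using Y4 unfolding mQ_def by simp
  have Y4b': "mQ \<le> 2 * mX + 2 * mW" using Y4b unfolding mQ_def mX_def mW_def by simp
  have Y4c': "mW \<le> W^2 / 1000" using Y4c unfolding mW_def by simp
  have Y5': "2 * (W * E) \<le> W^2 + E^2" using Y5 by simp
  have Y6': "2 * (W * H) \<le> W^2 + H^2" using Y6 by simp
  have P4': "P4L \<le> W^2 / 1000 + E^2 - Dn^2 / 200 - mT" using P4 unfolding P4L_def mT_def by simp
  have nnsq: "0 \<le> W^2" "0 \<le> Dn^2" "0 \<le> E^2" "0 \<le> H^2" by simp_all
  have main: "V' \<le> - (mQ / 8 + mW / 8 + mT) + (cR + HH + H^2 + 2 * E^2)"
    using V'' P1' P3' Y1' Y2' Y2b' Y3' Y4' Y4b' Y4c' Y5' Y6' P4' qh we wh nnsq by linarith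
  have eqR: "- (a * m / 8) * (Q^2 + W^2 + (\<delta> / 100) * Tv)
               + (a * (L + m) * R^2 + (8 / (a * m)) * H^2 + H^2 + 2 * E^2)
           = - (mQ / 8 + mW / 8 + mT) + (cR + HH + H^2 + 2 * E^2)"
    unfolding mQ_def mW_def mT_def cR_def HH_def by (simp add: algebra_simps)
  show ?thesis unfolding eqR by (rule main)
qed

lemma S1:
  assumes t: "0 \<le> t"
  shows "(norm (q t))^2 + (norm (x t - q t))^2 \<le>
         exp (- (a * m / 8) * t) * ((norm x0)^2 + integral {0..t} (\<lambda>r. exp ((a * m / 8) * r) * K1 r))"
proof -
  define c where "c = a * m / 8"
  define V where "V s = (norm (q s))^2 + (norm (x s - q s))^2 + (\<delta> / 100) * T s" for s
  define qd where "qd s = (- (a / 2)) *\<^sub>R G (x (grid \<delta> s)) + h s" for s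
  define V' where "V' s = 2 * (q s \<bullet> qd s) + 2 * ((x s - q s) \<bullet> (u s - qd s)) + (\<delta> / 100) * (2 * \<delta> * U s - J s)" for s
  define S where "S = (gridpts \<delta> \<inter> {0..t}) \<union> {2 * \<delta>}"
  have "V t \<le> exp (- c * t) * (V 0 + integral {0..t} (\<lambda>r. exp (c * r) * K1 r))"
  proof (rule gronwall_fin[where S=S and V'=V'])
    show "finite S" unfolding S_def using gridpts_finite[OF dpos] by simp
    show "0 \<le> t" by (rule t)
    show "continuous_on {0..t} V" unfolding V_def
      by (intro continuous_intros continuous_on_subset[OF cx] continuous_on_subset[OF cq] cT[OF t]) auto
    show "(\<lambda>r. exp (c * r) * K1 r) integrable_on {0..t}"
      unfolding K1_def
      by (rule integrable_continuous_interval)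
         (intro continuous_intros continuous_on_subset[OF ce] continuous_on_subset[OF ch]; auto)
  next
    fix s assume s: "s \<in> {0<..<t} - S"
    then have s0: "s > 0" and sg: "s \<notin> gridpts \<delta>" and s2: "s \<noteq> 2 * \<delta>" unfolding S_def by auto
    have dq': "(q has_vector_derivative qd s) (at s)" unfolding qd_def by (rule dq[OF s0 sg])
    have dw: "((\<lambda>r. x r - q r) has_vector_derivative (u s - qd s)) (at s)"
      by (intro derivative_intros dx[OF s0] dq')
    show "(V has_real_derivative V' s) (at s)"
      unfolding V_def V'_def
      by (intro DERIV_add deriv_normsq[OF dq'] deriv_normsq[OF dw] DERIV_cmult dT[OF s0 s2])
    show "isCont K1 s" unfolding K1_def
      by (intro continuous_intros cont_at[OF s0 ce] cont_at[OF s0 ch])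
    define w where "w = x s - q s"
    define \<Gamma> where "\<Gamma> = G (x (grid \<delta> s))"
    define X where "X = norm (x s)"
    define Q where "Q = norm (q s)"
    define W where "W = norm w"
    define Dn where "Dn = norm (x s - x (grid \<delta> s))"
    define E where "E = norm (e s)"
    define H where "H = norm (h s)"
    have us: "u s = (-2) *\<^sub>R w + e s" using ueq[of s] s0 unfolding w_def by (simp add: algebra_simps)
    have V'eq: "V' s = - a * (q s \<bullet> \<Gamma>) + 2 * (q s \<bullet> h s) + (-4 * W^2 + 2 * (w \<bullet> e s) + a * (w \<bullet> \<Gamma>) - 2 * (w \<bullet> h s))
        + (\<delta> / 100) * (2 * \<delta> * U s - J s)"
      unfolding V'_def qd_def us w_def[symmetric] \<Gamma>_def[symmetric] W_def
      by (simp add: inner_add_right inner_diff_right power2_norm_eq_inner algebra_simps)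
    have xqw: "q s = x s - w" unfolding w_def by simp
    have Gx: "x s \<bullet> G (x s) \<ge> m * X^2 - (L + m) * R^2" unfolding X_def by (rule Gdiss)
    have wGx: "w \<bullet> G (x s) \<le> L * W * X"
    proof -
      have "w \<bullet> G (x s) \<le> W * norm (G (x s))" unfolding W_def by (rule norm_cauchy_schwarz)
      also have "\<dots> \<le> W * (L * X)" unfolding X_def W_def by (intro mult_left_mono Gbound) auto
      finally show ?thesis by (simp add: algebra_simps)
    qed
    have GD: "norm (\<Gamma> - G (x s)) \<le> L * Dn"
      unfolding \<Gamma>_def Dn_def using GLip[of "x (grid \<delta> s)" "x s"] by (simp add: norm_minus_commute)
    have qGD: "q s \<bullet> (\<Gamma> - G (x s)) \<ge> - (L * Q * Dn)"
    proof -
      have "- (q s \<bullet> (\<Gamma> - G (x s))) \<le> norm (q s) * norm (\<Gamma> - G (x s))"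
        using norm_cauchy_schwarz[of "- q s" "\<Gamma> - G (x s)"] by simp
      also have "\<dots> \<le> Q * (L * Dn)" unfolding Q_def by (intro mult_left_mono GD) auto
      finally show ?thesis by (simp add: algebra_simps)
    qed
    have qg: "q s \<bullet> \<Gamma> \<ge> m * X^2 - (L + m) * R^2 - L * W * X - L * Q * Dn"
    proof -
      have "q s \<bullet> \<Gamma> = x s \<bullet> G (x s) - w \<bullet> G (x s) + q s \<bullet> (\<Gamma> - G (x s))"
        unfolding xqw by (simp add: inner_diff_left inner_diff_right)
      then show ?thesis using Gx wGx qGD by linarith
    qed
    have qh: "q s \<bullet> h s \<le> Q * H" unfolding Q_def H_def by (rule norm_cauchy_schwarz)
    have we: "w \<bullet> e s \<le> W * E" unfolding W_def E_def by (rule norm_cauchy_schwarz)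
    have wh: "- (w \<bullet> h s) \<le> W * H" unfolding W_def H_def
      using norm_cauchy_schwarz[of w "- h s"] by simp
    have xg: "norm (x (grid \<delta> s)) \<le> X + Dn"
      unfolding X_def Dn_def using norm_triangle_ineq4[of "x s" "x s - x (grid \<delta> s)"] by simp
    have wg: "w \<bullet> \<Gamma> \<le> L * W * (X + Dn)"
    proof -
      have "w \<bullet> \<Gamma> \<le> W * norm \<Gamma>" unfolding W_def by (rule norm_cauchy_schwarz)
      also have "\<dots> \<le> W * (L * (X + Dn))" unfolding \<Gamma>_def W_def
        using Gbound[of "x (grid \<delta> s)"] xg Lpos
        by (intro mult_left_mono) (auto intro: order_trans mult_left_mono)
      finally show ?thesis by (simp add: algebra_simps)
    qed
    have Uv: "U s \<le> 8 * W^2 + 2 * E^2"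
    proof -
      have "norm (u s) \<le> 2 * W + E" unfolding us W_def E_def
        using norm_triangle_ineq[of "(-2) *\<^sub>R w" "e s"] by simp
      then have "(norm (u s))^2 \<le> (2 * W + E)^2" by (intro power_mono) auto
      also have "\<dots> \<le> 8 * W^2 + 2 * E^2" using young[of 1 "2 * W" E]
        by (simp add: power2_eq_square algebra_simps)
      finally show ?thesis unfolding U_def .
    qed
    have JD: "Dn^2 \<le> \<delta> * J s" unfolding Dn_def using D_le[of s] s0 by simp
    have JT: "T s \<le> 2 * \<delta> * J s" using T_le[of s] s0 by simp
    have QX1: "Q \<le> X + W" unfolding Q_def X_def W_def xqw by (rule norm_triangle_ineq4)
    have QX2: "Q^2 \<le> 2 * X^2 + 2 * W^2"
    proof -
      have "Q^2 \<le> (X + W)^2" using QX1 by (intro power_mono) (auto simp: Q_def)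
      also have "\<dots> \<le> 2 * X^2 + 2 * W^2" using young[of 1 X W] by (simp add: power2_eq_square algebra_simps)
      finally show ?thesis .
    qed
    have "V' s \<le> - (a * m / 8) * (Q^2 + W^2 + (\<delta> / 100) * T s)
               + (a * (L + m) * R^2 + (8 / (a * m)) * H^2 + H^2 + 2 * E^2)"
      by (rule S1_arith[OF V'eq _ _ _ _ _ _ _ qg qh we wh wg Uv JD JT QX1 QX2])
         (auto simp: X_def Q_def W_def Dn_def E_def H_def T_nonneg s0 less_imp_le)
    then show "V' s \<le> - c * V s + K1 s"
      unfolding V_def K1_def c_def Q_def W_def w_def H_def E_def by simp
  qed
  moreover have "V 0 = (norm x0)^2" unfolding V_def using x00 q00 T0 by simp
  moreover have "(norm (q t))^2 + (norm (x t - q t))^2 \<le> V t"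
    unfolding V_def using T_nonneg[OF t] dpos by simp
  ultimately show ?thesis unfolding c_def by simp
qed

end

lemma ceil_approx: "(\<lambda>n. real_of_int \<lceil>real (Suc n) * r\<rceil> / real (Suc n)) \<longlonglongrightarrow> r"
proof (rule tendsto_sandwich[where f="\<lambda>n. r" and h="\<lambda>n. r + 1 / real (Suc n)"])
  show "\<forall>\<^sub>F n in sequentially. r \<le> real_of_int \<lceil>real (Suc n) * r\<rceil> / real (Suc n)"
  proof (intro always_eventually allI)
    fix n :: nat
    have "real (Suc n) * r \<le> real_of_int \<lceil>real (Suc n) * r\<rceil>" by (rule le_of_int_ceiling)
    then show "r \<le> real_of_int \<lceil>real (Suc n) * r\<rceil> / real (Suc n)"
      by (simp add: field_simps del: of_nat_Suc)
  qed
  show "\<forall>\<^sub>F n in sequentially. real_of_int \<lceil>real (Suc n) * r\<rceil> / real (Suc n) \<le> r + 1 / real (Suc n)"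
  proof (intro always_eventually allI)
    fix n :: nat
    have "real_of_int \<lceil>real (Suc n) * r\<rceil> \<le> real (Suc n) * r + 1" by linarith
    then show "real_of_int \<lceil>real (Suc n) * r\<rceil> / real (Suc n) \<le> r + 1 / real (Suc n)"
      by (simp add: field_simps del: of_nat_Suc)
  qed
  show "(\<lambda>n. r) \<longlonglongrightarrow> r" by simp
  have "(\<lambda>n. 1 / real (Suc n)) \<longlonglongrightarrow> 0" by (rule LIMSEQ_Suc[OF lim_const_over_n])
  then show "(\<lambda>n. r + 1 / real (Suc n)) \<longlonglongrightarrow> r" using tendsto_add[of "\<lambda>n. r" r] by fastforce
qed

lemma meas_version:
  fixes f :: "real \<Rightarrow> 'a \<Rightarrow> real^'d" and M :: "'a measure"
  assumes fm: "\<And>t. t \<ge> 0 \<Longrightarrow> f t \<in> borel_measurable M"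
    and N: "N \<in> sets M"
    and fc: "\<And>\<omega>. \<omega> \<in> space M - N \<Longrightarrow> continuous_on {0..} (\<lambda>t. f t \<omega>)"
  shows "(\<lambda>p. if snd p \<in> N then 0 else f (max 0 (fst p)) (snd p)) \<in> borel_measurable (lborel \<Otimes>\<^sub>M M)"
proof (rule borel_measurable_LIMSEQ_metric)
  define fn where "fn n p = (if snd p \<in> N then 0 else
      f (max 0 (real_of_int \<lceil>real (Suc n) * fst p\<rceil> / real (Suc n))) (snd p))" for n p
  show "fn n \<in> borel_measurable (lborel \<Otimes>\<^sub>M M)" for n
  proof -
    have "(\<lambda>p. (\<lambda>i p. if snd p \<in> N then 0 else f (max 0 (real_of_int i / real (Suc n))) (snd p))
             (\<lceil>real (Suc n) * fst p\<rceil>) p) \<in> borel_measurable (lborel \<Otimes>\<^sub>M M)"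
    proof -
      have hm: "(\<lambda>p. if snd p \<in> N then 0 else f (max 0 (real_of_int i / real (Suc n))) (snd p))
          \<in> borel_measurable (lborel \<Otimes>\<^sub>M M)" for i :: int
      proof -
        have "(\<lambda>\<omega>. if \<omega> \<in> N then 0 else f (max 0 (real_of_int i / real (Suc n))) \<omega>) \<in> borel_measurable M"
          using N fm[of "max 0 (real_of_int i / real (Suc n))"] by (intro measurable_If_set) auto
        from measurable_compose[OF measurable_snd this, of lborel] show ?thesis by simp
      qed
      have g: "(\<lambda>p. \<lceil>real (Suc n) * fst p\<rceil>) \<in> lborel \<Otimes>\<^sub>M M \<rightarrow>\<^sub>M count_space UNIV"
        by measurable
      show ?thesis by (rule measurable_compose_countable'[OF hm g]) simp
    qed
    then show ?thesis unfolding fn_def by simp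
  qed
  fix p :: "real \<times> 'a" assume p: "p \<in> space (lborel \<Otimes>\<^sub>M M)"
  show "(\<lambda>n. fn n p) \<longlonglongrightarrow> (if snd p \<in> N then 0 else f (max 0 (fst p)) (snd p))"
  proof (cases "snd p \<in> N")
    case True then show ?thesis unfolding fn_def by simp
  next
    case False
    then have "snd p \<in> space M - N" using p by (auto simp: space_pair_measure)
    then have c: "continuous_on {0..} (\<lambda>t. f t (snd p))" by (rule fc)
    have "(\<lambda>n. max 0 (real_of_int \<lceil>real (Suc n) * fst p\<rceil> / real (Suc n))) \<longlonglongrightarrow> max 0 (fst p)"
      by (intro tendsto_max tendsto_const ceil_approx)
    then have "(\<lambda>n. f (max 0 (real_of_int \<lceil>real (Suc n) * fst p\<rceil> / real (Suc n))) (snd p)) \<longlonglongrightarrow> f (max 0 (fst p)) (snd p)"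
      by (rule continuous_on_tendsto_compose[OF c]) auto
    then show ?thesis using False unfolding fn_def by simp
  qed
qed

lemma norm_sq_vec: "(norm (v :: real^'d))^2 = (\<Sum>i\<in>UNIV. (v $ i)^2)"
  unfolding power2_norm_eq_inner inner_vec_def by (simp add: power2_eq_square)

lemma BM_incr:
  fixes B :: "real \<Rightarrow> 'a \<Rightarrow> real^'d" and M :: "'a measure"
  assumes BM: "brownian_motion M B" and st: "0 \<le> s" "s < t"
  shows "(\<integral>\<^sup>+\<omega>. ennreal ((norm (B t \<omega> - B s \<omega>))^2) \<partial>M) = ennreal (real CARD('d) * (t - s))"
proof -
  have D: "\<And>i. distributed M lborel (\<lambda>\<omega>. (B t \<omega> - B s \<omega>) $ i) (normal_density 0 (sqrt (t - s)))"
    using BM st unfolding brownian_motion_def by auto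
  have sp: "sqrt (t - s) > 0" using st by simp
  have one: "(\<integral>\<^sup>+\<omega>. ennreal (((B t \<omega> - B s \<omega>) $ i)^2) \<partial>M) = ennreal (t - s)" for i
  proof -
    have "(\<integral>\<^sup>+\<omega>. ennreal (((B t \<omega> - B s \<omega>) $ i)^2) \<partial>M) =
          (\<integral>\<^sup>+x. ennreal (normal_density 0 (sqrt (t - s)) x) * ennreal (x^2) \<partial>lborel)"
      by (rule distributed_nn_integral[OF D, symmetric]) simp
    also have "\<dots> = (\<integral>\<^sup>+x. ennreal (normal_density 0 (sqrt (t - s)) x * (x - 0)^(2*1)) \<partial>lborel)"
      by (simp add: ennreal_mult)
    also have "\<dots> = ennreal (\<integral>x. normal_density 0 (sqrt (t - s)) x * (x - 0)^(2*1) \<partial>lborel)"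
      by (rule nn_integral_eq_integral[OF integrable_normal_moment[OF sp]]) simp
    also have "\<dots> = ennreal (t - s)"
      using integral_normal_moment_even[OF sp, of 0 1] st by (simp add: power2_eq_square)
    finally show ?thesis .
  qed
  have meas: "(\<lambda>\<omega>. ennreal (((B t \<omega> - B s \<omega>) $ i)^2)) \<in> borel_measurable M" for i
  proof -
    have X: "(\<lambda>\<omega>. (B t \<omega> - B s \<omega>) $ i) \<in> borel_measurable M"
      using D[of i] by (simp add: distributed_def)
    have g: "(\<lambda>y::real. ennreal (y^2)) \<in> borel_measurable borel" by measurable
    show ?thesis using measurable_compose[OF X g] by simp
  qed
  have measR: "(\<lambda>\<omega>. ((B t \<omega> - B s \<omega>) $ i)^2) \<in> borel_measurable M" for i
  proof -
    have X: "(\<lambda>\<omega>. (B t \<omega> - B s \<omega>) $ i) \<in> borel_measurable M"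
      using D[of i] by (simp add: distributed_def)
    show ?thesis using borel_measurable_power[OF X, of 2] by simp
  qed
  have "(\<integral>\<^sup>+\<omega>. ennreal ((norm (B t \<omega> - B s \<omega>))^2) \<partial>M) =
        (\<integral>\<^sup>+\<omega>. (\<Sum>i\<in>UNIV. ennreal (((B t \<omega> - B s \<omega>) $ i)^2)) \<partial>M)"
    by (rule nn_integral_cong) (simp add: norm_sq_vec)
  also have "\<dots> = (\<Sum>i\<in>UNIV. (\<integral>\<^sup>+\<omega>. ennreal (((B t \<omega> - B s \<omega>) $ i)^2) \<partial>M))"
    by (rule nn_integral_sum) (use measR in simp)
  also have "\<dots> = (\<Sum>i\<in>(UNIV::'d set). ennreal (t - s))" by (intro sum.cong refl one)
  also have "\<dots> = ennreal (real CARD('d) * (t - s))"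
    using st by (simp add: ennreal_mult ennreal_of_nat_eq_real_of_nat)
  finally show ?thesis .
qed

lemma BM_incr_le:
  fixes B :: "real \<Rightarrow> 'a \<Rightarrow> real^'d" and M :: "'a measure"
  assumes BM: "brownian_motion M B" and st: "0 \<le> s" "0 \<le> t"
  shows "(\<integral>\<^sup>+\<omega>. ennreal ((norm (B t \<omega> - B s \<omega>))^2) \<partial>M) \<le> ennreal (real CARD('d) * \<bar>t - s\<bar>)"
proof -
  consider "s < t" | "s = t" | "t < s" by linarith
  then show ?thesis
  proof cases
    case 1 then show ?thesis using BM_incr[OF BM st(1) 1] by simp
  next
    case 2 then show ?thesis by simp
  next
    case 3
    have "(\<integral>\<^sup>+\<omega>. ennreal ((norm (B t \<omega> - B s \<omega>))^2) \<partial>M) = (\<integral>\<^sup>+\<omega>. ennreal ((norm (B s \<omega> - B t \<omega>))^2) \<partial>M)"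
      by (simp add: norm_minus_commute)
    then show ?thesis using BM_incr[OF BM st(2) 3] 3 by simp
  qed
qed

lemma cont_glue:
  fixes f :: "real \<Rightarrow> 'b::topological_space"
  assumes "\<And>b. continuous_on {0..b} f"
  shows "continuous_on {0..} f"
  unfolding continuous_on_eq_continuous_within
proof
  fix s :: real assume s: "s \<in> {0..}"
  have "continuous (at s within {0..s+1}) f"
    using assms[of "s+1"] s by (simp add: continuous_on_eq_continuous_within)
  moreover have "at s within {0..} = at s within {0..s+1}"
    by (rule at_within_nhd[where S="{..<s+1}"]) auto
  ultimately show "continuous (at s within {0..}) f" by (simp add: continuous_within)
qed

lemma deriv_int_vec:
  fixes f :: "real \<Rightarrow> 'b::banach"
  assumes cf: "continuous_on {l..} f" and s: "s > l"
  shows "((\<lambda>r. integral {l..r} f) has_vector_derivative f s) (at s)"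
proof -
  have "((\<lambda>r. integral {l..r} f) has_vector_derivative f s) (at s within {l..s+1})"
    by (rule integral_has_vector_derivative) (use cf s in \<open>auto intro: continuous_on_subset\<close>)
  moreover have "at s within {l..s+1} = at s"
    by (rule at_within_open_subset[where S="{l<..<s+1}"]) (use s in auto)
  ultimately show ?thesis by simp
qed

lemma cont_at_pos: "(s::real) > 0 \<Longrightarrow> continuous_on {0..} f \<Longrightarrow> isCont f s"
proof -
  assume s: "s > 0" and c: "continuous_on {0..} f"
  have i: "interior {0::real..} = {0<..}" by (rule interior_Ici[of "-1"]) simp
  show ?thesis by (rule continuous_on_interior[OF c]) (simp add: i s)
qed

lemma cont_int:
  fixes f :: "real \<Rightarrow> 'b::banach"
  assumes "\<And>b. f integrable_on {l..b}"
  shows "continuous_on {l..b} (\<lambda>r. integral {l..r} f)"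
  by (rule indefinite_integral_continuous_1[OF assms])

definition Bbar :: "(real \<Rightarrow> real^'d) \<Rightarrow> real \<Rightarrow> real^'d" where
  "Bbar Bf r = Bf (max 0 r)"
definition Mv :: "(real \<Rightarrow> real^'d) \<Rightarrow> real \<Rightarrow> real^'d" where
  "Mv Bf s = integral {-1..s} (Bbar Bf) - integral {-1..s-1} (Bbar Bf)"
definition ef :: "real \<Rightarrow> (real \<Rightarrow> real^'d) \<Rightarrow> real \<Rightarrow> real^'d" where
  "ef \<sigma> Bf s = \<sigma> *\<^sub>R (Bbar Bf s - Mv Bf s)"
definition hf :: "real \<Rightarrow> (real \<Rightarrow> real^'d) \<Rightarrow> real \<Rightarrow> real^'d" where
  "hf \<sigma> Bf s = (\<sigma> / 2) *\<^sub>R (Bbar Bf s - Bbar Bf (s - 1))"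
definition Ff :: "real \<Rightarrow> real \<Rightarrow> (real^'d \<Rightarrow> real^'d) \<Rightarrow> (real \<Rightarrow> real^'d) \<Rightarrow> (real \<Rightarrow> real^'d) \<Rightarrow> real \<Rightarrow> real^'d" where
  "Ff a \<delta> G X Uf r = (-2) *\<^sub>R Uf r - a *\<^sub>R G (X (grid \<delta> r))"
definition qf where
  "qf a \<sigma> \<delta> G x0 X Uf Bf s = x0 + integral {0..s} Uf + (1/2) *\<^sub>R integral {0..s} (Ff a \<delta> G X Uf)
     + (\<sigma> / 2) *\<^sub>R Mv Bf s"

lemma cBbar: fixes Bf :: "real \<Rightarrow> real^'d" assumes "continuous_on {0..} Bf" shows "continuous_on UNIV (Bbar Bf)"
  unfolding Bbar_def
  by (rule continuous_on_compose2[OF assms]) (auto intro!: continuous_intros)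

lemma Mv_int:
  fixes Bf :: "real \<Rightarrow> real^'d"
  assumes cB: "continuous_on {0..} Bf" and s: "s \<ge> 0"
  shows "Mv Bf s = integral {s-1..s} (Bbar Bf)"
proof -
  have "integral {-1..s-1} (Bbar Bf) + integral {s-1..s} (Bbar Bf) = integral {-1..s} (Bbar Bf)"
    apply (rule Henstock_Kurzweil_Integration.integral_combine)
    using s apply auto[2]
    by (rule integrable_continuous_interval, rule continuous_on_subset[OF cBbar[OF cB]]) auto
  then show ?thesis unfolding Mv_def by (simp add: algebra_simps)
qed

lemma Mv0: fixes Bf :: "real \<Rightarrow> real^'d" assumes "Bf 0 = 0" shows "Mv Bf 0 = 0"
proof -
  have "integral {-1..0} (Bbar Bf) = integral {-1..0::real} (\<lambda>r. 0 :: real^'d)"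
    by (rule integral_cong) (use assms in \<open>auto simp: Bbar_def\<close>)
  then show ?thesis unfolding Mv_def by simp
qed

lemma dMv: fixes Bf :: "real \<Rightarrow> real^'d" assumes cB: "continuous_on {0..} Bf" and s: "s > 0"
  shows "(Mv Bf has_vector_derivative (Bbar Bf s - Bbar Bf (s - 1))) (at s)"
proof -
  have c: "continuous_on {-1..} (Bbar Bf)" using cBbar[OF cB] by (rule continuous_on_subset) auto
  have d1: "((\<lambda>r. integral {-1..r} (Bbar Bf)) has_vector_derivative Bbar Bf s) (at s)"
    by (rule deriv_int_vec[OF c]) (use s in auto)
  have d2: "((\<lambda>r. integral {-1..r - 1} (Bbar Bf)) has_vector_derivative Bbar Bf (s - 1)) (at s)"
  proof -
    have "((\<lambda>r. integral {-1..r} (Bbar Bf)) has_vector_derivative Bbar Bf (s - 1)) (at (s - 1))"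
      by (rule deriv_int_vec[OF c]) (use s in auto)
    then have "((\<lambda>r. integral {-1..r} (Bbar Bf)) \<circ> (\<lambda>r. r - 1) has_vector_derivative 1 *\<^sub>R Bbar Bf (s - 1)) (at s)"
      by (intro vector_diff_chain_at derivative_eq_intros) auto
    then show ?thesis by (simp add: o_def)
  qed
  show ?thesis unfolding Mv_def[abs_def] using has_vector_derivative_diff[OF d1 d2] by simp
qed

lemma cMv: fixes Bf :: "real \<Rightarrow> real^'d" assumes cB: "continuous_on {0..} Bf" shows "continuous_on {0..} (Mv Bf)"
proof (rule cont_glue)
  fix b :: real
  have c: "continuous_on {-1..max b 0} (\<lambda>r. integral {-1..r} (Bbar Bf))"
    by (rule indefinite_integral_continuous_1, rule integrable_continuous_interval,
        rule continuous_on_subset[OF cBbar[OF cB]]) auto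
  have c1: "continuous_on {0..b} (\<lambda>r. integral {-1..r} (Bbar Bf))"
    by (rule continuous_on_subset[OF c]) auto
  have c2: "continuous_on {0..b} (\<lambda>r. integral {-1..r - 1} (Bbar Bf))"
    by (rule continuous_on_compose2[OF c]) (auto intro!: continuous_intros)
  show "continuous_on {0..b} (Mv Bf)" unfolding Mv_def[abs_def]
    by (intro continuous_intros c1 c2)
qed

lemma path_detsys:
  fixes G :: "real^'d \<Rightarrow> real^'d" and L m R \<delta> :: real and x0 :: "real^'d"
    and X Uf Bf :: "real \<Rightarrow> real^'d"
  defines "a \<equiv> 1 / (1000 * (L / m) * L)"
  defines "\<sigma> \<equiv> sqrt (4 / (1000 * (L / m) * L))"
  assumes Lpos: "L > 0" and mpos: "m > 0" and mL: "m \<le> L"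
    and dpos: "\<delta> > 0" and dle: "\<delta> \<le> 1 / 12000"
    and Gbound: "\<And>y. norm (G y) \<le> L * norm y"
    and GLip: "\<And>y z. norm (G y - G z) \<le> L * norm (y - z)"
    and Gdiss: "\<And>y. y \<bullet> G y \<ge> m * (norm y)^2 - (L + m) * R^2"
    and B0: "Bf 0 = 0" and cB: "continuous_on {0..} Bf"
    and cX: "continuous_on {0..} X" and cU: "continuous_on {0..} Uf"
    and eqs: "\<forall>s\<ge>0. X s = x0 + integral {0..s} Uf \<and>
                Uf s = integral {0..s} (\<lambda>r. (-2) *\<^sub>R Uf r
                            - (1 / (1000 * (L / m) * L)) *\<^sub>R G (X (of_int \<lfloor>r / \<delta>\<rfloor> * \<delta>)))
                         + sqrt (4 / (1000 * (L / m) * L)) *\<^sub>R Bf s"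
  shows "detsys G L m R a \<delta> x0 X Uf (qf a \<sigma> \<delta> G x0 X Uf Bf) (ef \<sigma> Bf) (hf \<sigma> Bf)"
proof -
  have eqX: "X s = x0 + integral {0..s} Uf" if "s \<ge> 0" for s using eqs that by blast
  have eqU: "Uf s = integral {0..s} (Ff a \<delta> G X Uf) + \<sigma> *\<^sub>R Bf s" if "s \<ge> 0" for s
    using eqs that unfolding Ff_def grid_def[abs_def] a_def \<sigma>_def by blast
  have apos: "a > 0" unfolding a_def using Lpos mpos by simp
  have aL2: "a * L^2 = m / 1000" unfolding a_def using Lpos mpos by (simp add: power2_eq_square field_simps)
  have intF: "Ff a \<delta> G X Uf integrable_on {0..b}" if b: "b \<ge> 0" for b
  proof -
    have "(\<lambda>r. (\<lambda>r y. (-2) *\<^sub>R Uf r - a *\<^sub>R G (X y)) r (grid \<delta> r)) integrable_on {0..b}"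
      by (rule step_integrable[OF dpos b]) (intro continuous_intros continuous_on_subset[OF cU]; auto)
    then show ?thesis unfolding Ff_def[abs_def] by simp
  qed
  have intF': "Ff a \<delta> G X Uf integrable_on {0..b}" for b
  proof (cases "b \<ge> 0")
    case True then show ?thesis by (rule intF)
  next
    case False then show ?thesis by (simp add: integrable_on_empty)
  qed
  have intU: "Uf integrable_on {0..b}" for b
    by (rule integrable_continuous_interval, rule continuous_on_subset[OF cU]) auto
  have cP: "continuous_on {0..} (\<lambda>s. x0 + integral {0..s} Uf + (1/2) *\<^sub>R integral {0..s} (Ff a \<delta> G X Uf))"
    by (rule cont_glue) (intro continuous_intros cont_int intU intF')
  show ?thesis
  proof (unfold_locales)
    show "L > 0" "m > 0" "m \<le> L" "a > 0" "a * L^2 = m / 1000" "\<delta> > 0" "\<delta> \<le> 1 / 12000"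
      using Lpos mpos mL apos aL2 dpos dle by auto
    show "\<And>y. norm (G y) \<le> L * norm y" by (rule Gbound)
    show "\<And>y z. norm (G y - G z) \<le> L * norm (y - z)" by (rule GLip)
    show "\<And>y. y \<bullet> G y \<ge> m * (norm y)^2 - (L + m) * R^2" by (rule Gdiss)
    show "continuous_on {0..} X" by (rule cX)
    show "continuous_on {0..} Uf" by (rule cU)
    show "continuous_on {0..} (qf a \<sigma> \<delta> G x0 X Uf Bf)" unfolding qf_def[abs_def]
      by (intro continuous_intros cP cMv[OF cB])
    show "continuous_on {0..} (ef \<sigma> Bf)" unfolding ef_def[abs_def]
      by (intro continuous_intros cMv[OF cB] continuous_on_subset[OF cBbar[OF cB]]) auto
    show "continuous_on {0..} (hf \<sigma> Bf)" unfolding hf_def[abs_def]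
      by (intro continuous_intros continuous_on_compose2[OF cBbar[OF cB]]) auto
    show "(X has_vector_derivative Uf s) (at s)" if s: "s > 0" for s
    proof -
      have "((\<lambda>r. x0 + integral {0..r} Uf) has_vector_derivative Uf s) (at s)"
        using deriv_int_vec[OF cU s] by (intro derivative_eq_intros) auto
      then show ?thesis
        by (rule has_vector_derivative_transform_within_open[where S="{0<..}"]) (use s eqX in auto)
    qed
    show "(qf a \<sigma> \<delta> G x0 X Uf Bf has_vector_derivative
            ((- (a / 2)) *\<^sub>R G (X (grid \<delta> s)) + hf \<sigma> Bf s)) (at s)"
      if s: "s > 0" and sg: "s \<notin> gridpts \<delta>" for s
    proof -
      have c2: "isCont (\<lambda>r. G (X (grid \<delta> r))) s" by (rule grid_comp_cont[OF dpos sg])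
      have c1: "isCont Uf s" by (rule cont_at_pos[OF s cU])
      have cFs: "isCont (Ff a \<delta> G X Uf) s" unfolding Ff_def[abs_def]
        by (rule continuous_diff[OF continuous_scaleR[OF continuous_const c1] continuous_scaleR[OF continuous_const c2]])
      have dF: "((\<lambda>r. integral {0..r} (Ff a \<delta> G X Uf)) has_vector_derivative Ff a \<delta> G X Uf s) (at s)"
      proof -
        have "((\<lambda>r. integral {0..r} (Ff a \<delta> G X Uf)) has_vector_derivative Ff a \<delta> G X Uf s) (at s within ({0..s+1} - {}))"
          by (rule integral_has_vector_derivative_continuous_at[OF intF']) (use s cFs in \<open>auto intro: continuous_at_imp_continuous_within\<close>)
        moreover have "at s within ({0..s+1} - {}) = at s"
          by (rule at_within_open_subset[where S="{0<..<s+1}"]) (use s in auto)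
        ultimately show ?thesis by simp
      qed
      have "(qf a \<sigma> \<delta> G x0 X Uf Bf has_vector_derivative
            (Uf s + (1/2) *\<^sub>R Ff a \<delta> G X Uf s + (\<sigma> / 2) *\<^sub>R (Bbar Bf s - Bbar Bf (s - 1)))) (at s)"
        unfolding qf_def[abs_def]
        using deriv_int_vec[OF cU s] dF dMv[OF cB s]
        by (intro derivative_eq_intros) auto
      moreover have "Uf s + (1/2) *\<^sub>R Ff a \<delta> G X Uf s + (\<sigma> / 2) *\<^sub>R (Bbar Bf s - Bbar Bf (s - 1))
          = (- (a / 2)) *\<^sub>R G (X (grid \<delta> s)) + hf \<sigma> Bf s"
        unfolding Ff_def hf_def by (simp add: algebra_simps)
      ultimately show ?thesis by simp
    qed
    show "Uf s = 2 *\<^sub>R (qf a \<sigma> \<delta> G x0 X Uf Bf s - X s) + ef \<sigma> Bf s" if s: "s \<ge> 0" for s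
    proof -
      have "Bbar Bf s = Bf s" unfolding Bbar_def using s by simp
      then show ?thesis unfolding qf_def ef_def using eqX[OF s] eqU[OF s]
        by (simp add: algebra_simps)
    qed
    show "X 0 = x0" using eqX[of 0] by simp
    show "qf a \<sigma> \<delta> G x0 X Uf Bf 0 = x0" unfolding qf_def using Mv0[of Bf, OF B0] by simp
  qed
qed

lemma hk_to_nn:
  fixes f :: "real \<Rightarrow> real"
  assumes "f integrable_on {a..b}" and "\<And>r. r \<in> {a..b} \<Longrightarrow> 0 \<le> f r"
  shows "(\<integral>\<^sup>+r. ennreal (indicator {a..b} r * f r) \<partial>lborel) = ennreal (integral {a..b} f)"
  by (rule nn_integral_has_integral_lebesgue[OF assms(2)]) (use assms(1) in auto)

definition ZB :: "(real \<Rightarrow> real^'d) \<Rightarrow> real \<Rightarrow> ennreal" where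
  "ZB Bb r = (\<integral>\<^sup>+q. ennreal (indicator {r-1..r} q * (norm (Bb r - Bb q))^2) \<partial>lborel)"
definition HB :: "(real \<Rightarrow> real^'d) \<Rightarrow> real \<Rightarrow> ennreal" where
  "HB Bb r = ennreal ((norm (Bb r - Bb (r - 1)))^2)"
definition KB1 :: "real \<Rightarrow> real \<Rightarrow> real \<Rightarrow> (real \<Rightarrow> real^'d) \<Rightarrow> real \<Rightarrow> ennreal" where
  "KB1 k0 kH \<sigma> Bb r = ennreal k0 + ennreal (kH * \<sigma>^2 / 4) * HB Bb r + ennreal (2 * \<sigma>^2) * ZB Bb r"
definition KB2 :: "real \<Rightarrow> real \<Rightarrow> real \<Rightarrow> (real \<Rightarrow> real^'d) \<Rightarrow> (real \<Rightarrow> real^'d) \<Rightarrow> real \<Rightarrow> ennreal" where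
  "KB2 aL \<sigma> \<delta> Bb Xf r = ennreal (\<sigma>^2) * ZB Bb r + ennreal (\<sigma>^2 / 4) * HB Bb r
      + ennreal (aL^2) * ennreal ((norm (Xf (grid \<delta> r)))^2)"

lemma e_bound:
  fixes Bf :: "real \<Rightarrow> real^'d"
  assumes cB: "continuous_on {0..} Bf" and r: "r \<ge> 0"
  shows "ennreal ((norm (ef \<sigma> Bf r))^2) \<le> ennreal (\<sigma>^2) * ZB (Bbar Bf) r"
proof -
  have cb: "continuous_on UNIV (Bbar Bf)" by (rule cBbar[OF cB])
  have ci: "continuous_on {r-1..r} (\<lambda>q. Bbar Bf r - Bbar Bf q)"
    by (intro continuous_intros continuous_on_subset[OF cb]) auto
  have "Bbar Bf r - Mv Bf r = integral {r-1..r} (\<lambda>q. Bbar Bf r - Bbar Bf q)"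
  proof -
    have "integral {r-1..r} (\<lambda>q. Bbar Bf r - Bbar Bf q) = integral {r-1..r} (\<lambda>q. Bbar Bf r) - integral {r-1..r} (Bbar Bf)"
      by (rule integral_diff) (auto intro!: integrable_continuous_interval continuous_on_subset[OF cb])
    then show ?thesis using Mv_int[OF cB r] by simp
  qed
  then have "(norm (Bbar Bf r - Mv Bf r))^2 \<le> (r - (r - 1)) * integral {r-1..r} (\<lambda>q. (norm (Bbar Bf r - Bbar Bf q))^2)"
    using cs_integral[OF ci] by simp
  then have le: "(norm (ef \<sigma> Bf r))^2 \<le> \<sigma>^2 * integral {r-1..r} (\<lambda>q. (norm (Bbar Bf r - Bbar Bf q))^2)"
    unfolding ef_def by (simp add: power_mult_distrib mult_left_mono)
  have "ZB (Bbar Bf) r = ennreal (integral {r-1..r} (\<lambda>q. (norm (Bbar Bf r - Bbar Bf q))^2))"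
    unfolding ZB_def
    by (rule hk_to_nn) (auto intro!: integrable_continuous_interval continuous_intros continuous_on_subset[OF cb])
  moreover have I0: "0 \<le> integral {r-1..r} (\<lambda>q. (norm (Bbar Bf r - Bbar Bf q))^2)"
    by (rule integral_nonneg) (auto intro!: integrable_continuous_interval continuous_intros continuous_on_subset[OF cb])
  moreover have "ennreal (\<sigma>^2) * ennreal (integral {r-1..r} (\<lambda>q. (norm (Bbar Bf r - Bbar Bf q))^2))
      = ennreal (\<sigma>^2 * integral {r-1..r} (\<lambda>q. (norm (Bbar Bf r - Bbar Bf q))^2))"
    using I0 by (simp add: ennreal_mult)
  ultimately show ?thesis using le by (simp add: ennreal_leI)
qed

lemma h_eq:
  fixes Bf :: "real \<Rightarrow> real^'d"
  shows "(norm (hf \<sigma> Bf r))^2 = (\<sigma>^2 / 4) * (norm (Bbar Bf r - Bbar Bf (r - 1)))^2"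
  unfolding hf_def by (simp add: power_mult_distrib power_divide)

lemma ennreal_plus3: "0 \<le> (x::real) \<Longrightarrow> 0 \<le> y \<Longrightarrow> 0 \<le> z \<Longrightarrow> ennreal (x + y + z) = ennreal x + ennreal y + ennreal z"
  by (simp add: ennreal_plus)

lemma sq_sum_le: "(norm ((y::real^'d) + z))^2 \<le> 2 * (norm y)^2 + 2 * (norm z)^2"
proof -
  have "norm (y + z) \<le> norm y + norm z" by (rule norm_triangle_ineq)
  then have "(norm (y + z))^2 \<le> (norm y + norm z)^2" by (intro power_mono) auto
  also have "\<dots> \<le> 2 * (norm y)^2 + 2 * (norm z)^2"
    using young[of 1 "norm y" "norm z"] by (simp add: power2_eq_square algebra_simps)
  finally show ?thesis .
qed

lemma ennreal_ind_mult_le: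
  assumes "r \<in> S \<Longrightarrow> ennreal (f r) \<le> g r" and "\<And>r. 0 \<le> k r" and "\<And>r. r \<in> S \<Longrightarrow> 0 \<le> f r"
  shows "ennreal (indicator S r * (k r * f r)) \<le> ennreal (indicator S r * k r) * g r"
proof (cases "r \<in> S")
  case True
  then have "ennreal (indicator S r * (k r * f r)) = ennreal (k r) * ennreal (f r)"
    using assms by (simp add: ennreal_mult)
  also have "\<dots> \<le> ennreal (k r) * g r" using assms(1)[OF True] by (rule mult_left_mono) simp
  finally show ?thesis using True by simp
qed simp

lemma path_bounds:
  fixes G :: "real^'d \<Rightarrow> real^'d" and L m R \<delta> :: real and x0 :: "real^'d"
    and X Uf Bf :: "real \<Rightarrow> real^'d"
  defines "a \<equiv> 1 / (1000 * (L / m) * L)"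
  defines "\<sigma> \<equiv> sqrt (4 / (1000 * (L / m) * L))"
  assumes Lpos: "L > 0" and mpos: "m > 0" and mL: "m \<le> L"
    and dpos: "\<delta> > 0" and dle: "\<delta> \<le> 1 / 12000"
    and Gbound: "\<And>y. norm (G y) \<le> L * norm y"
    and GLip: "\<And>y z. norm (G y - G z) \<le> L * norm (y - z)"
    and Gdiss: "\<And>y. y \<bullet> G y \<ge> m * (norm y)^2 - (L + m) * R^2"
    and B0: "Bf 0 = 0" and cB: "continuous_on {0..} Bf"
    and cX: "continuous_on {0..} X" and cU: "continuous_on {0..} Uf"
    and eqs: "\<forall>s\<ge>0. X s = x0 + integral {0..s} Uf \<and>
                Uf s = integral {0..s} (\<lambda>r. (-2) *\<^sub>R Uf r
                            - (1 / (1000 * (L / m) * L)) *\<^sub>R G (X (of_int \<lfloor>r / \<delta>\<rfloor> * \<delta>)))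
                         + sqrt (4 / (1000 * (L / m) * L)) *\<^sub>R Bf s"
    and t: "t \<ge> 0"
  shows "ennreal ((norm (X t))^2) \<le> ennreal (2 * (norm x0)^2) +
           2 * (\<integral>\<^sup>+r. ennreal (indicator {0..t} r * exp (- (a * m / 8) * (t - r)))
                 * KB1 (a * (L + m) * R^2) (8 / (a * m) + 1) \<sigma> (Bbar Bf) r \<partial>lborel)"
    and "ennreal ((norm (Uf t))^2) \<le> 8 * (\<integral>\<^sup>+r. ennreal (indicator {0..t} r * exp (- (t - r)))
                 * KB2 (a * L) \<sigma> \<delta> (Bbar Bf) (\<lambda>r. X (max 0 r)) r \<partial>lborel)
           + ennreal (2 * \<sigma>^2) * ZB (Bbar Bf) t"
    and "ennreal ((norm (G (X t) - G (X (of_int \<lfloor>t / \<delta>\<rfloor> * \<delta>))))^2) \<le>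
           ennreal (L^2 * \<delta>) * (\<integral>\<^sup>+r. ennreal (indicator {grid \<delta> t..t} r * (norm (Uf (max 0 r)))^2) \<partial>lborel)"
proof -
  interpret D: detsys G L m R a \<delta> x0 X Uf "qf a \<sigma> \<delta> G x0 X Uf Bf" "ef \<sigma> Bf" "hf \<sigma> Bf"
    unfolding a_def \<sigma>_def
    by (rule path_detsys[OF Lpos mpos mL dpos dle Gbound GLip Gdiss B0 cB cX cU eqs])
  let ?q = "qf a \<sigma> \<delta> G x0 X Uf Bf"
  let ?e = "ef \<sigma> Bf"
  let ?h = "hf \<sigma> Bf"
  define c where "c = a * m / 8"
  have ce: "continuous_on {0..} (\<lambda>r. (norm (?e r))^2)" by (intro continuous_intros D.ce)
  have ch: "continuous_on {0..} (\<lambda>r. (norm (?h r))^2)" by (intro continuous_intros D.ch)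
  have Ke: "ennreal ((norm (?e r))^2) \<le> ennreal (\<sigma>^2) * ZB (Bbar Bf) r" if "r \<ge> 0" for r
    by (rule e_bound[OF cB that])
  have sig2: "\<sigma>^2 = 4 * a" unfolding \<sigma>_def a_def using Lpos mpos by simp
  have apos: "a > 0" by (rule D.apos)
  have K1le: "ennreal (D.K1 r) \<le> KB1 (a * (L + m) * R^2) (8 / (a * m) + 1) \<sigma> (Bbar Bf) r" if r: "r \<ge> 0" for r
  proof -
    have k0: "0 \<le> a * (L + m) * R^2" using apos Lpos mpos by simp
    have kH: "0 \<le> 8 / (a * m) + 1" using apos mpos by simp
    have "D.K1 r = a * (L + m) * R^2 + ((8 / (a * m) + 1) * \<sigma>^2 / 4) * (norm (Bbar Bf r - Bbar Bf (r - 1)))^2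
                  + 2 * (norm (?e r))^2"
      unfolding D.K1_def h_eq by (simp add: algebra_simps)
    then have e1: "ennreal (D.K1 r) = ennreal (a * (L + m) * R^2) + ennreal (((8 / (a * m) + 1) * \<sigma>^2 / 4) * (norm (Bbar Bf r - Bbar Bf (r - 1)))^2)
                 + ennreal (2 * (norm (?e r))^2)"
      using k0 kH by (simp add: ennreal_plus3)
    have e2: "ennreal (((8 / (a * m) + 1) * \<sigma>^2 / 4) * (norm (Bbar Bf r - Bbar Bf (r - 1)))^2)
        = ennreal ((8 / (a * m) + 1) * \<sigma>^2 / 4) * HB (Bbar Bf) r"
      unfolding HB_def by (rule ennreal_mult) (use kH in auto)
    have e3: "ennreal (2 * (norm (?e r))^2) = ennreal 2 * ennreal ((norm (?e r))^2)"
      by (simp add: ennreal_mult)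
    have "ennreal (D.K1 r) = ennreal (a * (L + m) * R^2) + ennreal ((8 / (a * m) + 1) * \<sigma>^2 / 4) * HB (Bbar Bf) r
                 + ennreal 2 * ennreal ((norm (?e r))^2)"
      unfolding e1 e2 e3 ..
    also have "\<dots> \<le> ennreal (a * (L + m) * R^2) + ennreal ((8 / (a * m) + 1) * \<sigma>^2 / 4) * HB (Bbar Bf) r
                 + ennreal 2 * (ennreal (\<sigma>^2) * ZB (Bbar Bf) r)"
      by (intro add_left_mono mult_left_mono Ke[OF r]) auto
    also have "\<dots> = KB1 (a * (L + m) * R^2) (8 / (a * m) + 1) \<sigma> (Bbar Bf) r"
      unfolding KB1_def by (simp add: ennreal_mult mult.assoc)
    finally show ?thesis .
  qed
  have S1: "(norm (?q t))^2 + (norm (X t - ?q t))^2 \<le>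
      exp (- c * t) * ((norm x0)^2 + integral {0..t} (\<lambda>r. exp (c * r) * D.K1 r))"
    using D.S1[OF t] unfolding c_def by simp
  have cK1: "continuous_on {0..t} D.K1" unfolding D.K1_def
    by (intro continuous_intros continuous_on_subset[OF D.ce] continuous_on_subset[OF D.ch]) auto
  have eqI: "exp (- c * t) * integral {0..t} (\<lambda>r. exp (c * r) * D.K1 r) = integral {0..t} (\<lambda>r. exp (- c * (t - r)) * D.K1 r)"
  proof -
    have "exp (- c * t) * integral {0..t} (\<lambda>r. exp (c * r) * D.K1 r) = integral {0..t} (\<lambda>r. exp (- c * t) * (exp (c * r) * D.K1 r))"
      by (simp add: integral_mult_right)
    also have "\<dots> = integral {0..t} (\<lambda>r. exp (- c * (t - r)) * D.K1 r)"
      by (rule integral_cong) (simp add: mult.assoc[symmetric] exp_add[symmetric] algebra_simps)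
    finally show ?thesis .
  qed
  have K1nn: "0 \<le> D.K1 r" for r unfolding D.K1_def using apos mpos Lpos by simp
  have nnI1: "ennreal (integral {0..t} (\<lambda>r. exp (- c * (t - r)) * D.K1 r)) =
      (\<integral>\<^sup>+r. ennreal (indicator {0..t} r * (exp (- c * (t - r)) * D.K1 r)) \<partial>lborel)"
    by (rule hk_to_nn[symmetric]) (auto intro!: integrable_continuous_interval continuous_intros cK1 K1nn mult_nonneg_nonneg)
  have mono1: "(\<integral>\<^sup>+r. ennreal (indicator {0..t} r * (exp (- c * (t - r)) * D.K1 r)) \<partial>lborel) \<le>
      (\<integral>\<^sup>+r. ennreal (indicator {0..t} r * exp (- c * (t - r))) * KB1 (a * (L + m) * R^2) (8 / (a * m) + 1) \<sigma> (Bbar Bf) r \<partial>lborel)"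
    by (rule nn_integral_mono, rule ennreal_ind_mult_le) (auto intro: K1le K1nn)
  have Xq: "(norm (X t))^2 \<le> 2 * (norm (?q t))^2 + 2 * (norm (X t - ?q t))^2"
    using sq_sum_le[of "?q t" "X t - ?q t"] by simp
  have I0: "0 \<le> integral {0..t} (\<lambda>r. exp (- c * (t - r)) * D.K1 r)"
    by (rule integral_nonneg) (auto intro!: integrable_continuous_interval continuous_intros cK1 K1nn mult_nonneg_nonneg)
  have "(norm (X t))^2 \<le> 2 * (exp (- c * t) * (norm x0)^2) + 2 * integral {0..t} (\<lambda>r. exp (- c * (t - r)) * D.K1 r)"
    using Xq S1 eqI by (simp add: algebra_simps)
  also have "\<dots> \<le> 2 * (norm x0)^2 + 2 * integral {0..t} (\<lambda>r. exp (- c * (t - r)) * D.K1 r)"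
  proof -
    have "exp (- c * t) \<le> 1" using t apos mpos unfolding c_def by simp
    then have "exp (- c * t) * (norm x0)^2 \<le> 1 * (norm x0)^2" by (intro mult_right_mono) auto
    then show ?thesis by simp
  qed
  finally have N1r: "(norm (X t))^2 \<le> 2 * (norm x0)^2 + 2 * integral {0..t} (\<lambda>r. exp (- c * (t - r)) * D.K1 r)" .
  then have "ennreal ((norm (X t))^2) \<le> ennreal (2 * (norm x0)^2) + 2 * ennreal (integral {0..t} (\<lambda>r. exp (- c * (t - r)) * D.K1 r))"
  proof -
    define I where "I = integral {0..t} (\<lambda>r. exp (- c * (t - r)) * D.K1 r)"
    have p1: "ennreal (2 * (norm x0)^2 + 2 * I) = ennreal (2 * (norm x0)^2) + ennreal (2 * I)"
      by (rule ennreal_plus) (use I0 in \<open>auto simp: I_def\<close>)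
    have p2: "ennreal (2 * I) = ennreal 2 * ennreal I" by (rule ennreal_mult) (use I0 in \<open>auto simp: I_def\<close>)
    have "ennreal ((norm (X t))^2) \<le> ennreal (2 * (norm x0)^2 + 2 * I)"
      by (rule ennreal_leI) (use N1r in \<open>simp add: I_def\<close>)
    then have "ennreal ((norm (X t))^2) \<le> ennreal (2 * (norm x0)^2) + ennreal 2 * ennreal I"
      by (simp only: p1 p2)
    then show ?thesis by (simp add: I_def)
  qed
  also have "\<dots> \<le> ennreal (2 * (norm x0)^2) + 2 * (\<integral>\<^sup>+r. ennreal (indicator {0..t} r * exp (- c * (t - r))) * KB1 (a * (L + m) * R^2) (8 / (a * m) + 1) \<sigma> (Bbar Bf) r \<partial>lborel)"
    unfolding nnI1 by (intro add_left_mono mult_left_mono mono1) auto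
  finally show "ennreal ((norm (X t))^2) \<le> ennreal (2 * (norm x0)^2) +
           2 * (\<integral>\<^sup>+r. ennreal (indicator {0..t} r * exp (- (a * m / 8) * (t - r)))
                 * KB1 (a * (L + m) * R^2) (8 / (a * m) + 1) \<sigma> (Bbar Bf) r \<partial>lborel)"
    unfolding c_def by simp
  define w where "w = X t - ?q t"
  have us: "Uf t = (-2) *\<^sub>R w + ?e t" using D.ueq[OF t] unfolding w_def by (simp add: algebra_simps)
  have Uw: "(norm (Uf t))^2 \<le> 8 * (norm w)^2 + 2 * (norm (?e t))^2"
    using sq_sum_le[of "(-2) *\<^sub>R w" "?e t"] unfolding us by (simp add: power_mult_distrib)
  have S2: "(norm w)^2 \<le> exp (- t) * integral {0..t} (\<lambda>r. exp r * D.K2 r)"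
    unfolding w_def by (rule D.S2[OF t])
  have K2nn: "0 \<le> D.K2 r" for r unfolding D.K2_def by simp
  have iK2: "(\<lambda>r. exp (- (t - r)) * D.K2 r) integrable_on {0..t}"
  proof -
    have "(\<lambda>r. (\<lambda>r y. exp (- (t - r)) * ((norm (?e r))^2 + (norm (?h r))^2 + (a * L)^2 * (norm (X y))^2)) r (grid \<delta> r))
        integrable_on {0..t}"
      by (rule step_integrable[OF dpos t])
         (intro continuous_intros continuous_on_subset[OF D.ce] continuous_on_subset[OF D.ch]; auto)
    then show ?thesis unfolding D.K2_def by simp
  qed
  have eqI2: "exp (- t) * integral {0..t} (\<lambda>r. exp r * D.K2 r) = integral {0..t} (\<lambda>r. exp (- (t - r)) * D.K2 r)"
  proof -
    have "exp (- t) * integral {0..t} (\<lambda>r. exp r * D.K2 r) = integral {0..t} (\<lambda>r. exp (- t) * (exp r * D.K2 r))"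
      by (simp add: integral_mult_right)
    also have "\<dots> = integral {0..t} (\<lambda>r. exp (- (t - r)) * D.K2 r)"
      by (rule integral_cong) (simp add: mult.assoc[symmetric] exp_add[symmetric] algebra_simps)
    finally show ?thesis .
  qed
  have nnI2: "ennreal (integral {0..t} (\<lambda>r. exp (- (t - r)) * D.K2 r)) =
      (\<integral>\<^sup>+r. ennreal (indicator {0..t} r * (exp (- (t - r)) * D.K2 r)) \<partial>lborel)"
    by (rule hk_to_nn[symmetric, OF iK2]) (simp add: K2nn)
  have K2le: "ennreal (D.K2 r) \<le> KB2 (a * L) \<sigma> \<delta> (Bbar Bf) (\<lambda>r. X (max 0 r)) r" if r: "r \<in> {0..t}" for r
  proof -
    have g0: "0 \<le> grid \<delta> r" using grid_nonneg[OF dpos] r by auto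
    have e1: "ennreal (D.K2 r) = ennreal ((norm (?e r))^2) + ennreal ((\<sigma>^2 / 4) * (norm (Bbar Bf r - Bbar Bf (r - 1)))^2)
        + ennreal ((a * L)^2 * (norm (X (grid \<delta> r)))^2)"
      unfolding D.K2_def h_eq by (simp add: ennreal_plus3)
    have e2: "ennreal ((\<sigma>^2 / 4) * (norm (Bbar Bf r - Bbar Bf (r - 1)))^2) = ennreal (\<sigma>^2 / 4) * HB (Bbar Bf) r"
      unfolding HB_def by (rule ennreal_mult) auto
    have e3: "ennreal ((a * L)^2 * (norm (X (grid \<delta> r)))^2) = ennreal ((a * L)^2) * ennreal ((norm (X (max 0 (grid \<delta> r))))^2)"
      using g0 by (simp add: ennreal_mult)
    have "ennreal (D.K2 r) = ennreal ((norm (?e r))^2) + ennreal (\<sigma>^2 / 4) * HB (Bbar Bf) r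
        + ennreal ((a * L)^2) * ennreal ((norm (X (max 0 (grid \<delta> r))))^2)"
      unfolding e1 e2 e3 ..
    also have "\<dots> \<le> ennreal (\<sigma>^2) * ZB (Bbar Bf) r + ennreal (\<sigma>^2 / 4) * HB (Bbar Bf) r
        + ennreal ((a * L)^2) * ennreal ((norm (X (max 0 (grid \<delta> r))))^2)"
      using Ke[of r] r by (intro add_right_mono) auto
    finally show ?thesis unfolding KB2_def by simp
  qed
  have mono2: "(\<integral>\<^sup>+r. ennreal (indicator {0..t} r * (exp (- (t - r)) * D.K2 r)) \<partial>lborel) \<le>
      (\<integral>\<^sup>+r. ennreal (indicator {0..t} r * exp (- (t - r))) * KB2 (a * L) \<sigma> \<delta> (Bbar Bf) (\<lambda>r. X (max 0 r)) r \<partial>lborel)"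
    by (rule nn_integral_mono, rule ennreal_ind_mult_le) (auto intro: K2le K2nn)
  have I2: "0 \<le> integral {0..t} (\<lambda>r. exp (- (t - r)) * D.K2 r)"
    by (rule integral_nonneg[OF iK2]) (simp add: K2nn)
  have "ennreal ((norm (Uf t))^2) \<le> ennreal (8 * (norm w)^2 + 2 * (norm (?e t))^2)"
    by (rule ennreal_leI[OF Uw])
  also have "\<dots> = ennreal 8 * ennreal ((norm w)^2) + ennreal 2 * ennreal ((norm (?e t))^2)"
  proof -
    have "ennreal (8 * (norm w)^2 + 2 * (norm (?e t))^2) = ennreal (8 * (norm w)^2) + ennreal (2 * (norm (?e t))^2)"
      by (rule ennreal_plus) auto
    moreover have "ennreal (8 * (norm w)^2) = ennreal 8 * ennreal ((norm w)^2)" by (rule ennreal_mult) auto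
    moreover have "ennreal (2 * (norm (?e t))^2) = ennreal 2 * ennreal ((norm (?e t))^2)" by (rule ennreal_mult) auto
    ultimately show ?thesis by simp
  qed
  also have "\<dots> \<le> ennreal 8 * (\<integral>\<^sup>+r. ennreal (indicator {0..t} r * exp (- (t - r))) * KB2 (a * L) \<sigma> \<delta> (Bbar Bf) (\<lambda>r. X (max 0 r)) r \<partial>lborel)
        + ennreal 2 * (ennreal (\<sigma>^2) * ZB (Bbar Bf) t)"
  proof (intro add_mono mult_left_mono)
    have "ennreal ((norm w)^2) \<le> ennreal (integral {0..t} (\<lambda>r. exp (- (t - r)) * D.K2 r))"
      by (rule ennreal_leI) (use S2 eqI2 in simp)
    then show "ennreal ((norm w)^2) \<le> (\<integral>\<^sup>+r. ennreal (indicator {0..t} r * exp (- (t - r))) * KB2 (a * L) \<sigma> \<delta> (Bbar Bf) (\<lambda>r. X (max 0 r)) r \<partial>lborel)"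
      using nnI2 mono2 by simp
    show "ennreal ((norm (?e t))^2) \<le> ennreal (\<sigma>^2) * ZB (Bbar Bf) t" by (rule Ke[OF t])
  qed auto
  finally show "ennreal ((norm (Uf t))^2) \<le> 8 * (\<integral>\<^sup>+r. ennreal (indicator {0..t} r * exp (- (t - r)))
                 * KB2 (a * L) \<sigma> \<delta> (Bbar Bf) (\<lambda>r. X (max 0 r)) r \<partial>lborel)
           + ennreal (2 * \<sigma>^2) * ZB (Bbar Bf) t"
    by (simp add: ennreal_mult mult.assoc)
  define g where "g = grid \<delta> t"
  have g: "0 \<le> g" "g \<le> t" "t < g + \<delta>" using grid_bounds[OF dpos, of t] grid_nonneg[OF dpos t]
    unfolding g_def by auto
  have "(Uf has_integral (X t - X g)) {g..t}"
    apply (rule fundamental_theorem_of_calculus_interior[OF g(2)])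
     apply (rule continuous_on_subset[OF cX]) using g apply auto[1]
    using D.dx g by auto
  then have "X t - X g = integral {g..t} Uf" by (simp add: integral_unique)
  then have n1: "(norm (X t - X g))^2 \<le> (t - g) * integral {g..t} (\<lambda>r. (norm (Uf r))^2)"
    using cs_integral[of g t Uf] g continuous_on_subset[OF cU, of "{g..t}"] by auto
  have J0: "0 \<le> integral {g..t} (\<lambda>r. (norm (Uf r))^2)"
    by (rule integral_nonneg) (use g in \<open>auto intro!: integrable_continuous_interval continuous_intros continuous_on_subset[OF cU]\<close>)
  have n2: "(norm (X t - X g))^2 \<le> \<delta> * integral {g..t} (\<lambda>r. (norm (Uf r))^2)"
    using n1 mult_right_mono[OF _ J0, of "t - g" \<delta>] g by linarith
  have "(norm (G (X t) - G (X g)))^2 \<le> (L * norm (X t - X g))^2"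
    using GLip[of "X t" "X g"] by (intro power_mono) auto
  also have "\<dots> = L^2 * (norm (X t - X g))^2" by (simp add: power_mult_distrib)
  also have "\<dots> \<le> L^2 * (\<delta> * integral {g..t} (\<lambda>r. (norm (Uf r))^2))"
    using n2 by (intro mult_left_mono) auto
  finally have n3: "(norm (G (X t) - G (X g)))^2 \<le> (L^2 * \<delta>) * integral {g..t} (\<lambda>r. (norm (Uf r))^2)"
    by (simp add: mult.assoc)
  have nn3: "ennreal (integral {g..t} (\<lambda>r. (norm (Uf r))^2)) =
      (\<integral>\<^sup>+r. ennreal (indicator {g..t} r * (norm (Uf (max 0 r)))^2) \<partial>lborel)"
  proof -
    have "ennreal (integral {g..t} (\<lambda>r. (norm (Uf r))^2)) =
      (\<integral>\<^sup>+r. ennreal (indicator {g..t} r * (norm (Uf r))^2) \<partial>lborel)"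
      by (rule hk_to_nn[symmetric]) (use g in \<open>auto intro!: integrable_continuous_interval continuous_intros continuous_on_subset[OF cU]\<close>)
    also have "\<dots> = (\<integral>\<^sup>+r. ennreal (indicator {g..t} r * (norm (Uf (max 0 r)))^2) \<partial>lborel)"
      by (rule nn_integral_cong) (use g in \<open>auto simp: indicator_def\<close>)
    finally show ?thesis .
  qed
  have "ennreal ((norm (G (X t) - G (X g)))^2) \<le> ennreal ((L^2 * \<delta>) * integral {g..t} (\<lambda>r. (norm (Uf r))^2))"
    by (rule ennreal_leI[OF n3])
  also have "\<dots> = ennreal (L^2 * \<delta>) * ennreal (integral {g..t} (\<lambda>r. (norm (Uf r))^2))"
    by (rule ennreal_mult) (use dpos J0 in auto)
  also have "\<dots> = ennreal (L^2 * \<delta>) * (\<integral>\<^sup>+r. ennreal (indicator {g..t} r * (norm (Uf (max 0 r)))^2) \<partial>lborel)"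
    by (simp only: nn3)
  finally show "ennreal ((norm (G (X t) - G (X (of_int \<lfloor>t / \<delta>\<rfloor> * \<delta>))))^2) \<le>
           ennreal (L^2 * \<delta>) * (\<integral>\<^sup>+r. ennreal (indicator {grid \<delta> t..t} r * (norm (Uf (max 0 r)))^2) \<partial>lborel)"
    unfolding g_def grid_def by simp
qed

lemma ennreal_lin: "0 \<le> x \<Longrightarrow> 0 \<le> y \<Longrightarrow> ennreal x + numeral n * ennreal y = ennreal (x + numeral n * y)"
  by (simp add: ennreal_plus ennreal_mult)

locale expsetup = prob_space M for M :: "'a measure" +
  fixes Bh :: "real \<times> 'a \<Rightarrow> real^'d" and d :: real
  assumes Bh_meas[measurable]: "Bh \<in> borel_measurable (lborel \<Otimes>\<^sub>M M)"
    and EB: "\<And>r q. (\<integral>\<^sup>+\<omega>. ennreal ((norm (Bh (r, \<omega>) - Bh (q, \<omega>)))^2) \<partial>M) \<le> ennreal (d * \<bar>r - q\<bar>)"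
    and d0: "d \<ge> 0"
begin

lemma PS: "pair_sigma_finite lborel M"
  unfolding pair_sigma_finite_def using sigma_finite_lborel sigma_finite_measure_axioms by simp

lemma tonelli:
  assumes "F \<in> borel_measurable (lborel \<Otimes>\<^sub>M M)"
  shows "(\<integral>\<^sup>+\<omega>. (\<integral>\<^sup>+r. F (r, \<omega>) \<partial>lborel) \<partial>M) = (\<integral>\<^sup>+r. (\<integral>\<^sup>+\<omega>. F (r, \<omega>) \<partial>M) \<partial>lborel)"
proof -
  interpret P: pair_sigma_finite lborel M by (rule PS)
  show ?thesis by (rule P.Fubini[OF assms])
qed

lemma meas_ZB: "(\<lambda>p. ZB (\<lambda>r. Bh (r, snd p)) (fst p)) \<in> borel_measurable (lborel \<Otimes>\<^sub>M M)"
proof -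
  have "(\<lambda>(p, q). ennreal (indicator {fst p - 1..fst p} q * (norm (Bh p - Bh (q, snd p)))^2))
        \<in> borel_measurable ((lborel \<Otimes>\<^sub>M M) \<Otimes>\<^sub>M lborel)"
    unfolding indicator_def atLeastAtMost_iff by measurable
  from lborel.borel_measurable_nn_integral_fst[OF this] show ?thesis
    unfolding ZB_def by simp
qed

lemma meas_HB: "(\<lambda>p. HB (\<lambda>r. Bh (r, snd p)) (fst p)) \<in> borel_measurable (lborel \<Otimes>\<^sub>M M)"
  unfolding HB_def by measurable

lemma E_ZB: "(\<integral>\<^sup>+\<omega>. ZB (\<lambda>r. Bh (r, \<omega>)) r \<partial>M) \<le> ennreal d"
proof -
  interpret P: pair_sigma_finite lborel M by (rule PS)
  have m: "(\<lambda>(q, \<omega>). ennreal (indicator {r-1..r} q * (norm (Bh (r, \<omega>) - Bh (q, \<omega>)))^2)) \<in> borel_measurable (lborel \<Otimes>\<^sub>M M)"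
    unfolding indicator_def by measurable
  have "(\<integral>\<^sup>+\<omega>. ZB (\<lambda>r. Bh (r, \<omega>)) r \<partial>M) =
        (\<integral>\<^sup>+q. (\<integral>\<^sup>+\<omega>. ennreal (indicator {r-1..r} q * (norm (Bh (r, \<omega>) - Bh (q, \<omega>)))^2) \<partial>M) \<partial>lborel)"
    unfolding ZB_def by (rule P.Fubini'[OF m])
  also have "\<dots> \<le> (\<integral>\<^sup>+q. ennreal (indicator {r-1..r} q * d) \<partial>lborel)"
  proof (rule nn_integral_mono)
    fix q
    show "(\<integral>\<^sup>+\<omega>. ennreal (indicator {r-1..r} q * (norm (Bh (r, \<omega>) - Bh (q, \<omega>)))^2) \<partial>M)
          \<le> ennreal (indicator {r-1..r} q * d)"
    proof (cases "q \<in> {r-1..r}")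
      case True
      then have "\<bar>r - q\<bar> \<le> 1" by auto
      then have "ennreal (d * \<bar>r - q\<bar>) \<le> ennreal d"
        using d0 by (intro ennreal_leI) (simp add: mult_left_le)
      then show ?thesis using True EB[of r q] by simp
    qed simp
  qed
  also have "\<dots> = ennreal d"
    using d0 by (simp add: ennreal_mult ennreal_indicator nn_integral_cmult_indicator mult.commute)
  finally show ?thesis .
qed

lemma E_HB: "(\<integral>\<^sup>+\<omega>. HB (\<lambda>r. Bh (r, \<omega>)) r \<partial>M) \<le> ennreal d"
  unfolding HB_def using EB[of r "r - 1"] by simp

lemma exp_kernel:
  assumes c: "c > 0" and t: "t \<ge> 0"
  shows "(\<integral>\<^sup>+r. ennreal (indicator {0..t} r * exp (- c * (t - r))) \<partial>lborel) \<le> ennreal (1 / c)"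
proof -
  have "((\<lambda>r. exp (- c * (t - r))) has_integral (exp (- c * (t - t)) / c - exp (- c * (t - 0)) / c)) {0..t}"
  proof (rule fundamental_theorem_of_calculus[OF t])
    fix r assume "r \<in> {0..t}"
    have "((\<lambda>r. exp (- c * (t - r)) / c) has_real_derivative (exp (- c * (t - r)) * (- c * (0 - 1)) / c)) (at r within {0..t})"
      by (intro derivative_eq_intros) (use c in auto)
    then show "((\<lambda>r. exp (- c * (t - r)) / c) has_vector_derivative exp (- c * (t - r))) (at r within {0..t})"
      using c by (simp add: has_real_derivative_iff_has_vector_derivative)
  qed
  then have "(\<integral>\<^sup>+r. ennreal (indicator {0..t} r * exp (- c * (t - r))) \<partial>lborel) = ennreal (1 / c - exp (- c * t) / c)"
    by (subst nn_integral_has_integral_lebesgue[where I="1 / c - exp (- c * t) / c"]) auto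
  also have "\<dots> \<le> ennreal (1 / c)" using c by (intro ennreal_leI) simp
  finally show ?thesis .
qed

lemma slice_meas:
  assumes "F \<in> borel_measurable (lborel \<Otimes>\<^sub>M M)"
  shows "(\<lambda>\<omega>. F (r, \<omega>)) \<in> borel_measurable M"
  using measurable_compose[OF measurable_Pair1'[of r lborel M] assms] by simp

lemma int_meas:
  assumes "F \<in> borel_measurable (lborel \<Otimes>\<^sub>M M)"
  shows "(\<lambda>\<omega>. \<integral>\<^sup>+r. F (r, \<omega>) \<partial>lborel) \<in> borel_measurable M"
proof -
  have "(\<lambda>(\<omega>, r). F (r, \<omega>)) \<in> borel_measurable (M \<Otimes>\<^sub>M lborel)"
    using measurable_compose[OF measurable_pair_swap' assms] by (simp add: case_prod_beta)
  from lborel.borel_measurable_nn_integral[OF this] show ?thesis by simp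
qed

lemma E_kernel:
  assumes F: "F \<in> borel_measurable (lborel \<Otimes>\<^sub>M M)" and k: "k \<in> borel_measurable borel"
    and FC: "\<And>r. (\<integral>\<^sup>+\<omega>. F (r, \<omega>) \<partial>M) \<le> ennreal C"
  shows "(\<integral>\<^sup>+\<omega>. (\<integral>\<^sup>+r. ennreal (k r) * F (r, \<omega>) \<partial>lborel) \<partial>M) \<le> ennreal C * (\<integral>\<^sup>+r. ennreal (k r) \<partial>lborel)"
proof -
  have m: "(\<lambda>p. ennreal (k (fst p)) * F p) \<in> borel_measurable (lborel \<Otimes>\<^sub>M M)"
    using F k by measurable
  have "(\<integral>\<^sup>+\<omega>. (\<integral>\<^sup>+r. ennreal (k r) * F (r, \<omega>) \<partial>lborel) \<partial>M) =
        (\<integral>\<^sup>+r. (\<integral>\<^sup>+\<omega>. ennreal (k r) * F (r, \<omega>) \<partial>M) \<partial>lborel)"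
    using tonelli[OF m] by simp
  also have "\<dots> = (\<integral>\<^sup>+r. ennreal (k r) * (\<integral>\<^sup>+\<omega>. F (r, \<omega>) \<partial>M) \<partial>lborel)"
    by (intro nn_integral_cong nn_integral_cmult slice_meas[OF F])
  also have "\<dots> \<le> (\<integral>\<^sup>+r. ennreal (k r) * ennreal C \<partial>lborel)"
    by (intro nn_integral_mono mult_left_mono FC) auto
  also have "\<dots> = ennreal C * (\<integral>\<^sup>+r. ennreal (k r) \<partial>lborel)"
    using nn_integral_cmult[of "\<lambda>r. ennreal (k r)" lborel "ennreal C"] k by (simp add: mult.commute)
  finally show ?thesis .
qed

lemma meas_KB1: "(\<lambda>p. KB1 k0 kH \<sigma> (\<lambda>r. Bh (r, snd p)) (fst p)) \<in> borel_measurable (lborel \<Otimes>\<^sub>M M)"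
  unfolding KB1_def using meas_ZB meas_HB by measurable

lemma E_KB1:
  assumes k0: "k0 \<ge> 0" and kH: "kH \<ge> 0"
  shows "(\<integral>\<^sup>+\<omega>. KB1 k0 kH \<sigma> (\<lambda>r. Bh (r, \<omega>)) r \<partial>M) \<le> ennreal (k0 + kH * \<sigma>^2 / 4 * d + 2 * \<sigma>^2 * d)"
proof -
  have mZ: "(\<lambda>\<omega>. ZB (\<lambda>r. Bh (r, \<omega>)) r) \<in> borel_measurable M"
    using slice_meas[OF meas_ZB, of r] by simp
  have mH: "(\<lambda>\<omega>. HB (\<lambda>r. Bh (r, \<omega>)) r) \<in> borel_measurable M"
    using slice_meas[OF meas_HB, of r] by simp
  have "(\<integral>\<^sup>+\<omega>. KB1 k0 kH \<sigma> (\<lambda>r. Bh (r, \<omega>)) r \<partial>M) =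
      ennreal k0 + ennreal (kH * \<sigma>^2 / 4) * (\<integral>\<^sup>+\<omega>. HB (\<lambda>r. Bh (r, \<omega>)) r \<partial>M)
      + ennreal (2 * \<sigma>^2) * (\<integral>\<^sup>+\<omega>. ZB (\<lambda>r. Bh (r, \<omega>)) r \<partial>M)"
    unfolding KB1_def using mZ mH
    by (simp add: nn_integral_add nn_integral_cmult emeasure_space_1)
  also have "\<dots> \<le> ennreal k0 + ennreal (kH * \<sigma>^2 / 4) * ennreal d + ennreal (2 * \<sigma>^2) * ennreal d"
    by (intro add_mono mult_left_mono E_ZB E_HB) auto
  also have "\<dots> = ennreal (k0 + kH * \<sigma>^2 / 4 * d + 2 * \<sigma>^2 * d)"
    using k0 kH d0 by (simp add: ennreal_mult[symmetric] ennreal_plus[symmetric] del: ennreal_plus)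
  finally show ?thesis .
qed

lemma E_Bound1:
  assumes k0: "k0 \<ge> 0" and kH: "kH \<ge> 0" and A: "A \<ge> 0" and c: "c > 0" and t: "t \<ge> 0"
  shows "(\<integral>\<^sup>+\<omega>. ennreal A + 2 * (\<integral>\<^sup>+r. ennreal (indicator {0..t} r * exp (- c * (t - r)))
                 * KB1 k0 kH \<sigma> (\<lambda>r. Bh (r, \<omega>)) r \<partial>lborel) \<partial>M)
         \<le> ennreal (A + 2 * (k0 + kH * \<sigma>^2 / 4 * d + 2 * \<sigma>^2 * d) / c)"
proof -
  define C1 where "C1 = k0 + kH * \<sigma>^2 / 4 * d + 2 * \<sigma>^2 * d"
  have C1: "C1 \<ge> 0" unfolding C1_def using k0 kH d0 by simp
  have k: "(\<lambda>r. indicator {0..t} r * exp (- c * (t - r))) \<in> borel_measurable borel"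
    unfolding indicator_def by measurable
  have F: "(\<lambda>p. ennreal (indicator {0..t} (fst p) * exp (- c * (t - fst p))) * KB1 k0 kH \<sigma> (\<lambda>r. Bh (r, snd p)) (fst p))
      \<in> borel_measurable (lborel \<Otimes>\<^sub>M M)"
    using meas_KB1 unfolding indicator_def by measurable
  have mi: "(\<lambda>\<omega>. \<integral>\<^sup>+r. ennreal (indicator {0..t} r * exp (- c * (t - r))) * KB1 k0 kH \<sigma> (\<lambda>r. Bh (r, \<omega>)) r \<partial>lborel)
      \<in> borel_measurable M"
    using int_meas[OF F] by simp
  have "(\<integral>\<^sup>+\<omega>. ennreal A + 2 * (\<integral>\<^sup>+r. ennreal (indicator {0..t} r * exp (- c * (t - r)))
                 * KB1 k0 kH \<sigma> (\<lambda>r. Bh (r, \<omega>)) r \<partial>lborel) \<partial>M)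
      = ennreal A + 2 * (\<integral>\<^sup>+\<omega>. (\<integral>\<^sup>+r. ennreal (indicator {0..t} r * exp (- c * (t - r)))
                 * KB1 k0 kH \<sigma> (\<lambda>r. Bh (r, \<omega>)) r \<partial>lborel) \<partial>M)"
    using mi by (simp add: nn_integral_add nn_integral_cmult emeasure_space_1)
  also have "\<dots> \<le> ennreal A + 2 * (ennreal C1 * ennreal (1 / c))"
  proof (intro add_left_mono mult_left_mono)
    have "(\<integral>\<^sup>+\<omega>. (\<integral>\<^sup>+r. ennreal (indicator {0..t} r * exp (- c * (t - r)))
                 * KB1 k0 kH \<sigma> (\<lambda>r. Bh (r, \<omega>)) r \<partial>lborel) \<partial>M)
        \<le> ennreal C1 * (\<integral>\<^sup>+r. ennreal (indicator {0..t} r * exp (- c * (t - r))) \<partial>lborel)"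
      using E_kernel[OF meas_KB1[of k0 kH \<sigma>] k, where C=C1] E_KB1[OF k0 kH, of \<sigma>] unfolding C1_def by simp
    also have "\<dots> \<le> ennreal C1 * ennreal (1 / c)"
      by (intro mult_left_mono exp_kernel c t) auto
    finally show "(\<integral>\<^sup>+\<omega>. (\<integral>\<^sup>+r. ennreal (indicator {0..t} r * exp (- c * (t - r)))
                 * KB1 k0 kH \<sigma> (\<lambda>r. Bh (r, \<omega>)) r \<partial>lborel) \<partial>M) \<le> ennreal C1 * ennreal (1 / c)" .
  qed auto
  also have "\<dots> = ennreal A + 2 * ennreal (C1 / c)"
    using C1 c by (simp add: ennreal_mult[symmetric])
  also have "\<dots> = ennreal (A + 2 * (C1 / c))" using A C1 c by (intro ennreal_lin) auto
  also have "\<dots> = ennreal (A + 2 * C1 / c)" by simp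
  finally show ?thesis unfolding C1_def .
qed

lemma meas_KB2:
  assumes Xm: "Xh \<in> borel_measurable (lborel \<Otimes>\<^sub>M M)"
  shows "(\<lambda>p. KB2 aL \<sigma> \<delta> (\<lambda>r. Bh (r, snd p)) (\<lambda>r. Xh (r, snd p)) (fst p)) \<in> borel_measurable (lborel \<Otimes>\<^sub>M M)"
proof -
  have g: "(\<lambda>p. (grid \<delta> (fst p), snd p)) \<in> measurable (lborel \<Otimes>\<^sub>M M) (lborel \<Otimes>\<^sub>M M)"
    unfolding grid_def by measurable
  have "(\<lambda>p. Xh (grid \<delta> (fst p), snd p)) \<in> borel_measurable (lborel \<Otimes>\<^sub>M M)"
    using measurable_compose[OF g Xm] by simp
  then show ?thesis unfolding KB2_def using meas_ZB meas_HB by measurable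
qed

lemma E_KB2:
  assumes Xm: "Xh \<in> borel_measurable (lborel \<Otimes>\<^sub>M M)"
    and EX: "\<And>s. (\<integral>\<^sup>+\<omega>. ennreal ((norm (Xh (s, \<omega>)))^2) \<partial>M) \<le> ennreal Cx"
    and Cx: "Cx \<ge> 0"
  shows "(\<integral>\<^sup>+\<omega>. KB2 aL \<sigma> \<delta> (\<lambda>r. Bh (r, \<omega>)) (\<lambda>r. Xh (r, \<omega>)) r \<partial>M)
         \<le> ennreal (\<sigma>^2 * d + \<sigma>^2 / 4 * d + aL^2 * Cx)"
proof -
  have mZ: "(\<lambda>\<omega>. ZB (\<lambda>r. Bh (r, \<omega>)) r) \<in> borel_measurable M"
    using slice_meas[OF meas_ZB, of r] by simp
  have mH: "(\<lambda>\<omega>. HB (\<lambda>r. Bh (r, \<omega>)) r) \<in> borel_measurable M"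
    using slice_meas[OF meas_HB, of r] by simp
  have mX: "(\<lambda>\<omega>. ennreal ((norm (Xh (grid \<delta> r, \<omega>)))^2)) \<in> borel_measurable M"
    using slice_meas[OF Xm, of "grid \<delta> r"] by measurable
  have "(\<integral>\<^sup>+\<omega>. KB2 aL \<sigma> \<delta> (\<lambda>r. Bh (r, \<omega>)) (\<lambda>r. Xh (r, \<omega>)) r \<partial>M) =
      ennreal (\<sigma>^2) * (\<integral>\<^sup>+\<omega>. ZB (\<lambda>r. Bh (r, \<omega>)) r \<partial>M) + ennreal (\<sigma>^2 / 4) * (\<integral>\<^sup>+\<omega>. HB (\<lambda>r. Bh (r, \<omega>)) r \<partial>M)
      + ennreal (aL^2) * (\<integral>\<^sup>+\<omega>. ennreal ((norm (Xh (grid \<delta> r, \<omega>)))^2) \<partial>M)"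
    unfolding KB2_def using mZ mH mX
    by (simp add: nn_integral_add nn_integral_cmult)
  also have "\<dots> \<le> ennreal (\<sigma>^2) * ennreal d + ennreal (\<sigma>^2 / 4) * ennreal d + ennreal (aL^2) * ennreal Cx"
    by (intro add_mono mult_left_mono E_ZB E_HB EX) auto
  also have "\<dots> = ennreal (\<sigma>^2 * d + \<sigma>^2 / 4 * d + aL^2 * Cx)"
    using Cx d0 by (simp add: ennreal_mult[symmetric] ennreal_plus[symmetric] del: ennreal_plus)
  finally show ?thesis .
qed

lemma E_Bound2:
  assumes Xm: "Xh \<in> borel_measurable (lborel \<Otimes>\<^sub>M M)"
    and EX: "\<And>s. (\<integral>\<^sup>+\<omega>. ennreal ((norm (Xh (s, \<omega>)))^2) \<partial>M) \<le> ennreal Cx"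
    and Cx: "Cx \<ge> 0" and t: "t \<ge> 0"
  shows "(\<integral>\<^sup>+\<omega>. 8 * (\<integral>\<^sup>+r. ennreal (indicator {0..t} r * exp (- (t - r)))
                 * KB2 aL \<sigma> \<delta> (\<lambda>r. Bh (r, \<omega>)) (\<lambda>r. Xh (r, \<omega>)) r \<partial>lborel)
           + ennreal (2 * \<sigma>^2) * ZB (\<lambda>r. Bh (r, \<omega>)) t \<partial>M)
         \<le> ennreal (8 * (\<sigma>^2 * d + \<sigma>^2 / 4 * d + aL^2 * Cx) + 2 * \<sigma>^2 * d)"
proof -
  define C2 where "C2 = \<sigma>^2 * d + \<sigma>^2 / 4 * d + aL^2 * Cx"
  have C2: "C2 \<ge> 0" unfolding C2_def using Cx d0 by simp
  have k: "(\<lambda>r. indicator {0..t} r * exp (- (t - r))) \<in> borel_measurable borel"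
    unfolding indicator_def by measurable
  have F: "(\<lambda>p. ennreal (indicator {0..t} (fst p) * exp (- (t - fst p))) * KB2 aL \<sigma> \<delta> (\<lambda>r. Bh (r, snd p)) (\<lambda>r. Xh (r, snd p)) (fst p))
      \<in> borel_measurable (lborel \<Otimes>\<^sub>M M)"
    using meas_KB2[OF Xm] unfolding indicator_def by measurable
  have mi: "(\<lambda>\<omega>. \<integral>\<^sup>+r. ennreal (indicator {0..t} r * exp (- (t - r))) * KB2 aL \<sigma> \<delta> (\<lambda>r. Bh (r, \<omega>)) (\<lambda>r. Xh (r, \<omega>)) r \<partial>lborel)
      \<in> borel_measurable M"
    using int_meas[OF F] by simp
  have mZ: "(\<lambda>\<omega>. ZB (\<lambda>r. Bh (r, \<omega>)) t) \<in> borel_measurable M"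
    using slice_meas[OF meas_ZB, of t] by simp
  have "(\<integral>\<^sup>+\<omega>. 8 * (\<integral>\<^sup>+r. ennreal (indicator {0..t} r * exp (- (t - r)))
                 * KB2 aL \<sigma> \<delta> (\<lambda>r. Bh (r, \<omega>)) (\<lambda>r. Xh (r, \<omega>)) r \<partial>lborel)
           + ennreal (2 * \<sigma>^2) * ZB (\<lambda>r. Bh (r, \<omega>)) t \<partial>M)
      = 8 * (\<integral>\<^sup>+\<omega>. (\<integral>\<^sup>+r. ennreal (indicator {0..t} r * exp (- (t - r)))
                 * KB2 aL \<sigma> \<delta> (\<lambda>r. Bh (r, \<omega>)) (\<lambda>r. Xh (r, \<omega>)) r \<partial>lborel) \<partial>M)
        + ennreal (2 * \<sigma>^2) * (\<integral>\<^sup>+\<omega>. ZB (\<lambda>r. Bh (r, \<omega>)) t \<partial>M)"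
    using mi mZ by (simp add: nn_integral_add nn_integral_cmult)
  also have "\<dots> \<le> 8 * (ennreal C2 * ennreal 1) + ennreal (2 * \<sigma>^2) * ennreal d"
  proof (intro add_mono mult_left_mono)
    have "(\<integral>\<^sup>+\<omega>. (\<integral>\<^sup>+r. ennreal (indicator {0..t} r * exp (- (t - r)))
                 * KB2 aL \<sigma> \<delta> (\<lambda>r. Bh (r, \<omega>)) (\<lambda>r. Xh (r, \<omega>)) r \<partial>lborel) \<partial>M)
        \<le> ennreal C2 * (\<integral>\<^sup>+r. ennreal (indicator {0..t} r * exp (- (t - r))) \<partial>lborel)"
      using E_kernel[OF meas_KB2[OF Xm, of aL \<sigma> \<delta>] k, where C=C2] E_KB2[OF Xm EX Cx, of aL \<sigma> \<delta>] unfolding C2_def by simp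
    also have "\<dots> \<le> ennreal C2 * ennreal (1 / 1)"
      using exp_kernel[of 1 t] t by (intro mult_left_mono) auto
    finally show "(\<integral>\<^sup>+\<omega>. (\<integral>\<^sup>+r. ennreal (indicator {0..t} r * exp (- (t - r)))
                 * KB2 aL \<sigma> \<delta> (\<lambda>r. Bh (r, \<omega>)) (\<lambda>r. Xh (r, \<omega>)) r \<partial>lborel) \<partial>M) \<le> ennreal C2 * ennreal 1"
      by simp
    show "(\<integral>\<^sup>+\<omega>. ZB (\<lambda>r. Bh (r, \<omega>)) t \<partial>M) \<le> ennreal d" by (rule E_ZB)
  qed auto
  also have "\<dots> = ennreal (2 * \<sigma>^2 * d) + 8 * ennreal C2"
    using C2 d0 by (simp add: ennreal_mult[symmetric] add.commute)
  also have "\<dots> = ennreal (2 * \<sigma>^2 * d + 8 * C2)" using C2 d0 by (intro ennreal_lin) auto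
  also have "\<dots> = ennreal (8 * C2 + 2 * \<sigma>^2 * d)" by (simp add: add.commute)
  finally show ?thesis unfolding C2_def .
qed

lemma E_final:
  assumes Um: "Uh \<in> borel_measurable (lborel \<Otimes>\<^sub>M M)"
    and EU: "\<And>s. (\<integral>\<^sup>+\<omega>. ennreal ((norm (Uh (s, \<omega>)))^2) \<partial>M) \<le> ennreal Cu"
    and Cu: "Cu \<ge> 0" and gt: "g \<le> t" and K: "K \<ge> 0"
  shows "(\<integral>\<^sup>+\<omega>. ennreal K * (\<integral>\<^sup>+r. ennreal (indicator {g..t} r * (norm (Uh (r, \<omega>)))^2) \<partial>lborel) \<partial>M)
         \<le> ennreal (K * Cu * (t - g))"
proof -
  have k: "(\<lambda>r. indicator {g..t} r :: real) \<in> borel_measurable borel" by measurable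
  have F: "(\<lambda>p. ennreal ((norm (Uh p))^2)) \<in> borel_measurable (lborel \<Otimes>\<^sub>M M)" using Um by measurable
  have F2: "(\<lambda>p. ennreal (indicator {g..t} (fst p)) * ennreal ((norm (Uh p))^2)) \<in> borel_measurable (lborel \<Otimes>\<^sub>M M)"
    using Um by measurable
  have eq: "\<And>\<omega>. (\<integral>\<^sup>+r. ennreal (indicator {g..t} r * (norm (Uh (r, \<omega>)))^2) \<partial>lborel)
      = (\<integral>\<^sup>+r. ennreal (indicator {g..t} r) * ennreal ((norm (Uh (r, \<omega>)))^2) \<partial>lborel)"
    by (rule nn_integral_cong) (simp add: ennreal_mult)
  have "(\<integral>\<^sup>+\<omega>. ennreal K * (\<integral>\<^sup>+r. ennreal (indicator {g..t} r * (norm (Uh (r, \<omega>)))^2) \<partial>lborel) \<partial>M)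
      = ennreal K * (\<integral>\<^sup>+\<omega>. (\<integral>\<^sup>+r. ennreal (indicator {g..t} r) * ennreal ((norm (Uh (r, \<omega>)))^2) \<partial>lborel) \<partial>M)"
    unfolding eq using int_meas[OF F2] by (simp add: nn_integral_cmult)
  also have "\<dots> \<le> ennreal K * (ennreal Cu * (\<integral>\<^sup>+r. ennreal (indicator {g..t} r) \<partial>lborel))"
    using E_kernel[OF F k, of Cu] EU by (intro mult_left_mono) auto
  also have "(\<integral>\<^sup>+r. ennreal (indicator {g..t} r) \<partial>lborel) = ennreal (t - g)"
    using gt by (simp add: ennreal_indicator)
  finally show ?thesis using K Cu gt by (simp add: ennreal_mult[symmetric] mult.assoc)
qed

end

theorem proposition19:
  fixes U :: "real^'d \<Rightarrow> real" and G :: "real^'d \<Rightarrow> real^'d"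
    and L m R \<delta> t :: real and x0 :: "real^'d"
    and M :: "'a measure" and B x u :: "real \<Rightarrow> 'a \<Rightarrow> real^'d"
  assumes grad: "\<forall>z. (U has_derivative (\<lambda>h. G z \<bullet> h)) (at z)"
    and contG: "continuous_on UNIV G"
    and Lpos: "L > 0"
    and Lip: "\<forall>y z. norm (G y - G z) \<le> L * norm (y - z)"
    and G0: "G 0 = 0"
    and mpos: "m > 0" and Rpos: "R > 0"
    and dissip: "\<forall>y z. norm (y - z) > R \<longrightarrow> (G y - G z) \<bullet> (y - z) \<ge> m * (norm (y - z))^2"
    and delta_pos: "\<delta> > 0"
    and delta_le: "\<delta> \<le> 1 / (12000 * (L / m))"
    and x0: "norm x0 \<le> R"
    and BM: "brownian_motion M B"
    and xmeas: "\<forall>s\<ge>0. x s \<in> borel_measurable M"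
    and umeas: "\<forall>s\<ge>0. u s \<in> borel_measurable M"
    and sol: "AE \<omega> in M.
        continuous_on {0..} (\<lambda>s. x s \<omega>) \<and> continuous_on {0..} (\<lambda>s. u s \<omega>) \<and>
        (\<forall>s\<ge>0. x s \<omega> = x0 + integral {0..s} (\<lambda>r. u r \<omega>) \<and>
                u s \<omega> = integral {0..s} (\<lambda>r. (-2) *\<^sub>R u r \<omega>
                            - (1 / (1000 * (L / m) * L)) *\<^sub>R G (x (of_int \<lfloor>r / \<delta>\<rfloor> * \<delta>) \<omega>))
                         + sqrt (4 / (1000 * (L / m) * L)) *\<^sub>R B s \<omega>)"
    and tpos: "t > 0"
  shows "(\<integral>\<^sup>+ \<omega>. ennreal ((norm (G (x t \<omega>) - G (x (of_int \<lfloor>t / \<delta>\<rfloor> * \<delta>) \<omega>)))^2) \<partial>M)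
           \<le> ennreal (10^9 * L^2 * \<delta>^2 * (R^2 + real CARD('d) / m))"
proof -
  have pM: "prob_space M" using BM unfolding brownian_motion_def by blast
  interpret P: prob_space M by (rule pM)
  define d where "d = real CARD('d)"
  define a where "a = 1 / (1000 * (L / m) * L)"
  define \<sigma> where "\<sigma> = sqrt (4 / (1000 * (L / m) * L))"
  have Gbound: "\<And>y. norm (G y) \<le> L * norm y" using Lip G0 by (metis diff_zero)
  have GLip: "\<And>y z. norm (G y - G z) \<le> L * norm (y - z)" using Lip by blast
  have mL: "m \<le> L"
  proof -
    obtain i :: 'd where True by auto
    define y where "y = (R + 1) *\<^sub>R (axis i 1 :: real^'d)"
    have ny: "norm y = R + 1" using Rpos by (simp add: y_def)
    have "(G y - G 0) \<bullet> (y - 0) \<ge> m * (norm (y - 0))^2" using dissip[rule_format, of y 0] ny by simp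
    then have l: "G y \<bullet> y \<ge> m * (norm y)^2" using G0 by simp
    have "G y \<bullet> y \<le> norm (G y) * norm y" by (rule norm_cauchy_schwarz)
    also have "\<dots> \<le> L * norm y * norm y" using Gbound[of y] by (intro mult_right_mono) auto
    finally have "m * (norm y)^2 \<le> L * (norm y)^2" using l by (simp add: power2_eq_square)
    then show ?thesis using ny Rpos by simp
  qed
  have Gdiss: "\<And>y. y \<bullet> G y \<ge> m * (norm y)^2 - (L + m) * R^2"
  proof -
    fix y :: "real^'d"
    show "y \<bullet> G y \<ge> m * (norm y)^2 - (L + m) * R^2"
    proof (cases "norm y > R")
      case True
      then have "(G y - G 0) \<bullet> (y - 0) \<ge> m * (norm (y - 0))^2" using dissip[rule_format, of y 0] by simp
      then have "y \<bullet> G y \<ge> m * (norm y)^2" using G0 by (simp add: inner_commute)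
      then show ?thesis using Lpos mpos by (smt (verit) zero_le_power2 mult_nonneg_nonneg)
    next
      case False
      then have ny: "norm y \<le> R" by simp
      have "- (y \<bullet> G y) \<le> norm y * norm (G y)" using norm_cauchy_schwarz[of "- y" "G y"] by simp
      also have "\<dots> \<le> norm y * (L * norm y)" by (intro mult_left_mono Gbound) auto
      also have "\<dots> = L * (norm y)^2" by (simp add: power2_eq_square)
      also have "\<dots> \<le> L * R^2" using ny Lpos by (intro mult_left_mono power_mono) auto
      finally have "y \<bullet> G y \<ge> - (L * R^2)" by simp
      moreover have "m * (norm y)^2 \<le> m * R^2" using ny mpos by (intro mult_left_mono power_mono) auto
      ultimately show ?thesis by (simp add: algebra_simps)
    qed
  qed
  have dle: "\<delta> \<le> 1 / 12000"
  proof -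
    have "1 / (12000 * (L / m)) \<le> 1 / 12000" using mL mpos Lpos by (simp add: field_simps)
    then show ?thesis using delta_le by simp
  qed
  have AE1: "AE \<omega> in M. B 0 \<omega> = 0 \<and> continuous_on {0..} (\<lambda>t. B t \<omega>)"
    using BM unfolding brownian_motion_def by blast
  have Bmeas: "\<And>s. s \<ge> 0 \<Longrightarrow> B s \<in> borel_measurable M"
    using BM unfolding brownian_motion_def by blast
  have "AE \<omega> in M. (B 0 \<omega> = 0 \<and> continuous_on {0..} (\<lambda>t. B t \<omega>)) \<and>
        (continuous_on {0..} (\<lambda>s. x s \<omega>) \<and> continuous_on {0..} (\<lambda>s. u s \<omega>) \<and>
        (\<forall>s\<ge>0. x s \<omega> = x0 + integral {0..s} (\<lambda>r. u r \<omega>) \<and>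
                u s \<omega> = integral {0..s} (\<lambda>r. (-2) *\<^sub>R u r \<omega>
                            - (1 / (1000 * (L / m) * L)) *\<^sub>R G (x (of_int \<lfloor>r / \<delta>\<rfloor> * \<delta>) \<omega>))
                         + sqrt (4 / (1000 * (L / m) * L)) *\<^sub>R B s \<omega>))"
    using AE1 sol by (rule AE_conjI)
  then obtain N where N1: "{\<omega> \<in> space M. \<not> ((B 0 \<omega> = 0 \<and> continuous_on {0..} (\<lambda>t. B t \<omega>)) \<and>
        (continuous_on {0..} (\<lambda>s. x s \<omega>) \<and> continuous_on {0..} (\<lambda>s. u s \<omega>) \<and>
        (\<forall>s\<ge>0. x s \<omega> = x0 + integral {0..s} (\<lambda>r. u r \<omega>) \<and>
                u s \<omega> = integral {0..s} (\<lambda>r. (-2) *\<^sub>R u r \<omega>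
                            - (1 / (1000 * (L / m) * L)) *\<^sub>R G (x (of_int \<lfloor>r / \<delta>\<rfloor> * \<delta>) \<omega>))
                         + sqrt (4 / (1000 * (L / m) * L)) *\<^sub>R B s \<omega>)))} \<subseteq> N"
    and N2: "N \<in> null_sets M"
    by (rule AE_E) blast
  have NS: "N \<in> sets M" using N2 by auto
  have good: "B 0 \<omega> = 0" "continuous_on {0..} (\<lambda>t. B t \<omega>)"
      "continuous_on {0..} (\<lambda>s. x s \<omega>)" "continuous_on {0..} (\<lambda>s. u s \<omega>)"
      "\<forall>s\<ge>0. x s \<omega> = x0 + integral {0..s} (\<lambda>r. u r \<omega>) \<and>
                u s \<omega> = integral {0..s} (\<lambda>r. (-2) *\<^sub>R u r \<omega>
                            - (1 / (1000 * (L / m) * L)) *\<^sub>R G (x (of_int \<lfloor>r / \<delta>\<rfloor> * \<delta>) \<omega>))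
                         + sqrt (4 / (1000 * (L / m) * L)) *\<^sub>R B s \<omega>"
    if "\<omega> \<in> space M - N" for \<omega>
    using N1 that by blast+
  define Bh where "Bh p = (if snd p \<in> N then 0 else B (max 0 (fst p)) (snd p))" for p
  define Xh where "Xh p = (if snd p \<in> N then 0 else x (max 0 (fst p)) (snd p))" for p
  define Uh where "Uh p = (if snd p \<in> N then 0 else u (max 0 (fst p)) (snd p))" for p
  have Bhm: "Bh \<in> borel_measurable (lborel \<Otimes>\<^sub>M M)" unfolding Bh_def[abs_def]
    by (rule meas_version[OF Bmeas NS]) (use good in auto)
  have Xhm: "Xh \<in> borel_measurable (lborel \<Otimes>\<^sub>M M)" unfolding Xh_def[abs_def]
    by (rule meas_version[OF _ NS]) (use good xmeas in auto)
  have Uhm: "Uh \<in> borel_measurable (lborel \<Otimes>\<^sub>M M)" unfolding Uh_def[abs_def]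
    by (rule meas_version[OF _ NS]) (use good umeas in auto)
  have AEN: "AE \<omega> in M. \<omega> \<notin> N" using N2 by (rule AE_not_in)
  have d0: "d \<ge> 0" unfolding d_def by simp
  have EB: "(\<integral>\<^sup>+\<omega>. ennreal ((norm (Bh (r, \<omega>) - Bh (q, \<omega>)))^2) \<partial>M) \<le> ennreal (d * \<bar>r - q\<bar>)" for r q
  proof -
    have "(\<integral>\<^sup>+\<omega>. ennreal ((norm (Bh (r, \<omega>) - Bh (q, \<omega>)))^2) \<partial>M) =
          (\<integral>\<^sup>+\<omega>. ennreal ((norm (B (max 0 r) \<omega> - B (max 0 q) \<omega>))^2) \<partial>M)"
      by (rule nn_integral_cong_AE) (use AEN in \<open>auto simp: Bh_def elim: eventually_mono\<close>)
    also have "\<dots> \<le> ennreal (d * \<bar>max 0 r - max 0 q\<bar>)" unfolding d_def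
      by (rule BM_incr_le[OF BM]) auto
    also have "\<dots> \<le> ennreal (d * \<bar>r - q\<bar>)"
      using d0 by (intro ennreal_leI mult_left_mono) auto
    finally show ?thesis .
  qed
  interpret E: expsetup M Bh d
    by (unfold_locales) (use Bhm EB d0 in auto)
  have eqsm: "\<forall>s\<ge>0. (\<lambda>s. x s \<omega>) s = x0 + integral {0..s} (\<lambda>s. u s \<omega>) \<and>
                (\<lambda>s. u s \<omega>) s = integral {0..s} (\<lambda>r. (-2) *\<^sub>R (\<lambda>s. u s \<omega>) r
                            - (1 / (1000 * (L / m) * L)) *\<^sub>R G ((\<lambda>s. x s \<omega>) (of_int \<lfloor>r / \<delta>\<rfloor> * \<delta>)))
                         + sqrt (4 / (1000 * (L / m) * L)) *\<^sub>R (\<lambda>s. B s \<omega>) s"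
    if "\<omega> \<in> space M - N" for \<omega> using good(5)[OF that] by simp
  note PB = path_bounds[OF Lpos mpos mL delta_pos dle Gbound GLip Gdiss good(1) good(2) good(3) good(4) eqsm]
  have Bbar_eq: "Bbar (\<lambda>s. B s \<omega>) = (\<lambda>r. Bh (r, \<omega>))" if "\<omega> \<notin> N" for \<omega>
    using that by (simp add: Bbar_def Bh_def fun_eq_iff)
  have Xh_eq: "(\<lambda>r. x (max 0 r) \<omega>) = (\<lambda>r. Xh (r, \<omega>))" if "\<omega> \<notin> N" for \<omega>
    using that by (simp add: Xh_def fun_eq_iff)
  define k0 where "k0 = a * (L + m) * R^2"
  define kH where "kH = 8 / (a * m) + 1"
  define c where "c = a * m / 8"
  have apos: "a > 0" unfolding a_def using Lpos mpos by simp
  have k0: "k0 \<ge> 0" unfolding k0_def using apos Lpos mpos by simp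
  have kH: "kH \<ge> 0" unfolding kH_def using apos mpos by simp
  have c0: "c > 0" unfolding c_def using apos mpos by simp
  define Cx where "Cx = 2 * (norm x0)^2 + 2 * (k0 + kH * \<sigma>^2 / 4 * d + 2 * \<sigma>^2 * d) / c"
  have Cx0: "Cx \<ge> 0" unfolding Cx_def using k0 kH c0 d0 by simp
  have EX: "(\<integral>\<^sup>+\<omega>. ennreal ((norm (Xh (s, \<omega>)))^2) \<partial>M) \<le> ennreal Cx" for s
  proof -
    have "AE \<omega> in M. ennreal ((norm (Xh (s, \<omega>)))^2) \<le> ennreal (2 * (norm x0)^2) +
           2 * (\<integral>\<^sup>+r. ennreal (indicator {0..max 0 s} r * exp (- c * (max 0 s - r)))
                 * KB1 k0 kH \<sigma> (\<lambda>r. Bh (r, \<omega>)) r \<partial>lborel)"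
    proof (rule AE_mp[OF AEN], rule AE_I2, rule impI)
      fix \<omega> assume \<omega>: "\<omega> \<in> space M" "\<omega> \<notin> N"
      have "Xh (s, \<omega>) = x (max 0 s) \<omega>" using \<omega> by (simp add: Xh_def)
      then show "ennreal ((norm (Xh (s, \<omega>)))^2) \<le> ennreal (2 * (norm x0)^2) +
           2 * (\<integral>\<^sup>+r. ennreal (indicator {0..max 0 s} r * exp (- c * (max 0 s - r)))
                 * KB1 k0 kH \<sigma> (\<lambda>r. Bh (r, \<omega>)) r \<partial>lborel)"
        using PB(1)[of \<omega> "max 0 s"] \<omega> Bbar_eq[OF \<omega>(2)]
        unfolding a_def[symmetric] \<sigma>_def[symmetric] k0_def kH_def c_def by simp
    qed
    then have "(\<integral>\<^sup>+\<omega>. ennreal ((norm (Xh (s, \<omega>)))^2) \<partial>M) \<le> (\<integral>\<^sup>+\<omega>. ennreal (2 * (norm x0)^2) +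
           2 * (\<integral>\<^sup>+r. ennreal (indicator {0..max 0 s} r * exp (- c * (max 0 s - r)))
                 * KB1 k0 kH \<sigma> (\<lambda>r. Bh (r, \<omega>)) r \<partial>lborel) \<partial>M)"
      by (rule nn_integral_mono_AE)
    also have "\<dots> \<le> ennreal Cx" unfolding Cx_def
      by (rule E.E_Bound1[OF k0 kH _ c0]) auto
    finally show ?thesis .
  qed
  define Cu where "Cu = 8 * (\<sigma>^2 * d + \<sigma>^2 / 4 * d + (a * L)^2 * Cx) + 2 * \<sigma>^2 * d"
  have Cu0: "Cu \<ge> 0" unfolding Cu_def using Cx0 d0 by simp
  have EU: "(\<integral>\<^sup>+\<omega>. ennreal ((norm (Uh (s, \<omega>)))^2) \<partial>M) \<le> ennreal Cu" for s
  proof -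
    have "AE \<omega> in M. ennreal ((norm (Uh (s, \<omega>)))^2) \<le> 8 * (\<integral>\<^sup>+r. ennreal (indicator {0..max 0 s} r * exp (- (max 0 s - r)))
                 * KB2 (a * L) \<sigma> \<delta> (\<lambda>r. Bh (r, \<omega>)) (\<lambda>r. Xh (r, \<omega>)) r \<partial>lborel)
           + ennreal (2 * \<sigma>^2) * ZB (\<lambda>r. Bh (r, \<omega>)) (max 0 s)"
    proof (rule AE_mp[OF AEN], rule AE_I2, rule impI)
      fix \<omega> assume \<omega>: "\<omega> \<in> space M" "\<omega> \<notin> N"
      have "Uh (s, \<omega>) = u (max 0 s) \<omega>" using \<omega> by (simp add: Uh_def)
      then show "ennreal ((norm (Uh (s, \<omega>)))^2) \<le> 8 * (\<integral>\<^sup>+r. ennreal (indicator {0..max 0 s} r * exp (- (max 0 s - r)))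
                 * KB2 (a * L) \<sigma> \<delta> (\<lambda>r. Bh (r, \<omega>)) (\<lambda>r. Xh (r, \<omega>)) r \<partial>lborel)
           + ennreal (2 * \<sigma>^2) * ZB (\<lambda>r. Bh (r, \<omega>)) (max 0 s)"
        using PB(2)[of \<omega> "max 0 s"] \<omega> Bbar_eq[OF \<omega>(2)] Xh_eq[OF \<omega>(2)]
        unfolding a_def[symmetric] \<sigma>_def[symmetric] by simp
    qed
    then have "(\<integral>\<^sup>+\<omega>. ennreal ((norm (Uh (s, \<omega>)))^2) \<partial>M) \<le> (\<integral>\<^sup>+\<omega>. 8 * (\<integral>\<^sup>+r. ennreal (indicator {0..max 0 s} r * exp (- (max 0 s - r)))
                 * KB2 (a * L) \<sigma> \<delta> (\<lambda>r. Bh (r, \<omega>)) (\<lambda>r. Xh (r, \<omega>)) r \<partial>lborel)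
           + ennreal (2 * \<sigma>^2) * ZB (\<lambda>r. Bh (r, \<omega>)) (max 0 s) \<partial>M)"
      by (rule nn_integral_mono_AE)
    also have "\<dots> \<le> ennreal Cu" unfolding Cu_def
      by (rule E.E_Bound2[OF Xhm EX Cx0]) auto
    finally show ?thesis .
  qed
  define g where "g = grid \<delta> t"
  have g: "g \<le> t" "t - g \<le> \<delta>" using grid_bounds[OF delta_pos, of t] unfolding g_def by auto
  have K0: "L^2 * \<delta> \<ge> 0" using delta_pos by simp
  have "(\<integral>\<^sup>+ \<omega>. ennreal ((norm (G (x t \<omega>) - G (x (of_int \<lfloor>t / \<delta>\<rfloor> * \<delta>) \<omega>)))^2) \<partial>M)
      \<le> (\<integral>\<^sup>+\<omega>. ennreal (L^2 * \<delta>) * (\<integral>\<^sup>+r. ennreal (indicator {g..t} r * (norm (Uh (r, \<omega>)))^2) \<partial>lborel) \<partial>M)"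
  proof (rule nn_integral_mono_AE, rule AE_mp[OF AEN], rule AE_I2, rule impI)
    fix \<omega> assume \<omega>: "\<omega> \<in> space M" "\<omega> \<notin> N"
    have "(\<lambda>r. u (max 0 r) \<omega>) = (\<lambda>r. Uh (r, \<omega>))" using \<omega> by (simp add: Uh_def fun_eq_iff)
    then show "ennreal ((norm (G (x t \<omega>) - G (x (of_int \<lfloor>t / \<delta>\<rfloor> * \<delta>) \<omega>)))^2)
        \<le> ennreal (L^2 * \<delta>) * (\<integral>\<^sup>+r. ennreal (indicator {g..t} r * (norm (Uh (r, \<omega>)))^2) \<partial>lborel)"
      using PB(3)[of \<omega> t] \<omega> tpos unfolding g_def by (simp add: fun_eq_iff)
  qed
  also have "\<dots> \<le> ennreal (L^2 * \<delta> * Cu * (t - g))"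
    by (rule E.E_final[OF Uhm EU Cu0 g(1) K0])
  also have "\<dots> \<le> ennreal (L^2 * \<delta>^2 * Cu)"
  proof (rule ennreal_leI)
    have "L^2 * \<delta> * Cu * (t - g) \<le> L^2 * \<delta> * Cu * \<delta>"
      using g Cu0 K0 by (intro mult_left_mono) auto
    then show "L^2 * \<delta> * Cu * (t - g) \<le> L^2 * \<delta>^2 * Cu" by (simp add: power2_eq_square algebra_simps)
  qed
  also have "\<dots> \<le> ennreal (10^9 * L^2 * \<delta>^2 * (R^2 + real CARD('d) / m))"
  proof (rule ennreal_leI)
    have "Cu \<le> 10^9 * (R^2 + d / m)"
    proof -
      have s2: "\<sigma>^2 = 4 * a" unfolding \<sigma>_def a_def using Lpos mpos by simp
      have aL2: "a * L^2 = m / 1000" unfolding a_def using Lpos mpos by (simp add: power2_eq_square field_simps)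
      have aL: "a * L \<le> 1 / 1000"
      proof -
        have "a * L = m / (1000 * L)" unfolding a_def using Lpos mpos by (simp add: field_simps)
        also have "\<dots> \<le> 1 / 1000" using mL Lpos by (simp add: field_simps)
        finally show ?thesis .
      qed
      have am: "a * m \<le> 1 / 1000" using aL mL apos by (smt (verit) mult_left_mono)
      have a1: "a * m \<le> 1 / 1000 * (1 / 1)" using am by simp
      have ad: "a * d \<le> d / (1000 * m)"
      proof -
        have "a * m \<le> (1 / 1000)" 
        proof -
          have "a * m = (m / L)^2 / 1000" unfolding a_def using Lpos mpos by (simp add: power2_eq_square field_simps)
          also have "\<dots> \<le> 1 / 1000" using mL Lpos mpos by (simp add: power_le_one)
          finally show ?thesis .
        qed
        then have h: "a * (1000 * m) \<le> 1" by simp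
        have "d * (a * (1000 * m)) \<le> d * 1" by (rule mult_left_mono[OF h d0])
        then show ?thesis using mpos by (simp add: field_simps)
      qed
      define C1 where "C1 = k0 + kH * \<sigma>^2 / 4 * d + 2 * \<sigma>^2 * d"
      have C1eq: "C1 = a * (L + m) * R^2 + 8 * (d / m) + 9 * (a * d)"
        unfolding C1_def k0_def kH_def s2 using apos mpos by (simp add: field_simps)
      have aLm: "a * (L + m) \<le> 2 / 1000" using aL am by (simp add: algebra_simps)
      have R2: "a * (L + m) * R^2 \<le> (2 / 1000) * R^2" using aLm by (intro mult_right_mono) auto
      have dm: "0 \<le> d / m" using d0 mpos by simp
      have ad': "a * d \<le> d / m / 1000" using ad by (simp add: field_simps)
      have R00: "0 \<le> R^2" by simp
      have C1le: "C1 \<le> R^2 + 9 * (d / m)"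
      proof -
        define Dm where "Dm = d / m"
        define Rs where "Rs = R^2"
        define X1 where "X1 = a * (L + m) * R^2"
        define Y where "Y = a * d"
        have f1: "C1 = X1 + 8 * Dm + 9 * Y" unfolding X1_def Dm_def Y_def using C1eq by simp
        have f2: "X1 \<le> Rs / 500" unfolding X1_def Rs_def using R2 by simp
        have f3: "Y \<le> Dm / 1000" unfolding Y_def Dm_def using ad' by simp
        have f4: "0 \<le> Dm" "0 \<le> Rs" unfolding Dm_def Rs_def using dm by simp_all
        have "C1 \<le> Rs + 9 * Dm" using f1 f2 f3 f4 by linarith
        then show ?thesis unfolding Rs_def Dm_def .
      qed
      have C10: "0 \<le> C1" unfolding C1_def using k0 kH d0 by simp
      have q: "1000 * ((a * L)^2 * (2 * C1 / c)) = 16 * C1"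
        unfolding c_def using aL2 apos mpos by (simp add: power2_eq_square field_simps)
      have aL2': "(a * L)^2 \<le> 1" using aL apos Lpos by (simp add: power_le_one)
      have x0R: "(norm x0)^2 \<le> R^2" using x0 by (intro power_mono) auto
      have x0b: "(a * L)^2 * (2 * (norm x0)^2) \<le> 2 * R^2"
        using mult_mono[OF aL2' _ _ , of "2 * (norm x0)^2" "2 * R^2"] x0R by simp
      have Cxs: "(a * L)^2 * Cx = (a * L)^2 * (2 * (norm x0)^2) + (a * L)^2 * (2 * C1 / c)"
        unfolding Cx_def C1_def by (simp add: algebra_simps)
      have Cueq: "Cu = 48 * (a * d) + 8 * ((a * L)^2 * Cx)"
        unfolding Cu_def s2 by (simp add: algebra_simps)
      define Dm where "Dm = d / m"
      define Rs where "Rs = R^2"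
      define Y where "Y = a * d"
      define P where "P = (a * L)^2 * Cx"
      define P1 where "P1 = (a * L)^2 * (2 * (norm x0)^2)"
      define P2 where "P2 = (a * L)^2 * (2 * C1 / c)"
      have g1: "Cu = 48 * Y + 8 * P" unfolding Y_def P_def by (rule Cueq)
      have g2: "P = P1 + P2" unfolding P_def P1_def P2_def by (rule Cxs)
      have g3: "1000 * P2 = 16 * C1" unfolding P2_def by (rule q)
      have g4: "P1 \<le> 2 * Rs" unfolding P1_def Rs_def by (rule x0b)
      have g5: "C1 \<le> Rs + 9 * Dm" unfolding Rs_def Dm_def by (rule C1le)
      have g6: "1000 * Y \<le> Dm" unfolding Y_def Dm_def using ad' by simp
      have g7: "0 \<le> Dm" "0 \<le> Rs" unfolding Dm_def Rs_def using dm by simp_all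
      have "Cu \<le> 1000000000 * Rs + 1000000000 * Dm" using g1 g2 g3 g4 g5 g6 g7 by linarith
      then show ?thesis unfolding Rs_def Dm_def by simp
    qed
    then have "L^2 * \<delta>^2 * Cu \<le> L^2 * \<delta>^2 * (10^9 * (R^2 + d / m))"
      by (intro mult_left_mono) auto
    then show "L^2 * \<delta>^2 * Cu \<le> 10^9 * L^2 * \<delta>^2 * (R^2 + real CARD('d) / m)"
      unfolding d_def by (simp add: algebra_simps)
  qed
  finally show ?thesis .
qed

end
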